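(* Let $\mathcal{A}=M_n(\mathbb{C}[x_1,\dots,x_d])$ be the $*$-algebra of $n\times n$ matrices with polynomial entries, and for $k\in\mathbb{N}$ let $\mathcal{A}_k=\mathrm{Lin}\{x^\alpha e_{ij}:|\alpha|\le k,\ i,j=1,\dots,n\}$. Let $m\in\mathbb{N}$, $\mathcal{B}=\mathcal{A}_m$, $\mathcal{C}=\mathcal{A}_{m+1}$, and let $L$ be a positive linear functional on $\mathcal{C}^2=\mathcal{A}_{2m+2}$ which is a flat extension with respect to $\mathcal{B}$. Then there exist $r\in\mathbb{N}$, points $t_1,\dots,t_r\in\mathbb{R}^d$ and vectors $u_i=(u_{1i},\dots,u_{ni})\in\mathbb{C}^n$, $i=1,\dots,r$, such that $$L((p_{jk}))=\sum_{j,k=1}^n\sum_{i=1}^r p_{jk}(t_i)\,u_{ki}\,\overline{u_{ji}}\quad\text{for all }(p_{jk})\in\mathcal{A}_{2m+2}.$$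
   Context: The involution on $\mathcal{A}$ is conjugate transpose, with the variables $x_l$ hermitian (polynomial coefficients conjugated); $e_{ij}$ are the matrix units, $e_{ij}^*=e_{ji}$, and $x^\alpha e_{ij}$ is the matrix with entry $x^\alpha$ in position $(i,j)$ and $0$ elsewhere. For a $*$-invariant subspace $\mathcal{C}\ni1$, $\mathcal{C}^2:=\mathrm{Lin}\{ab:a,b\in\mathcal{C}\}$. A linear functional $L$ on $\mathcal{C}^2$ is positive if $L(a^*a)\ge0$ for $a\in\mathcal{C}$; $K_L(\mathcal{C}):=\{a\in\mathcal{C}:L(b^*a)=0\ \forall b\in\mathcal{C}\}$; $L$ is a flat extension with respect to $\mathcal{B}\subseteq\mathcal{C}$ if $\mathcal{C}=\mathcal{B}+K_L(\mathcal{C})$. *)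

theory Defs
  imports Complex_Main
begin

text \<open>Elements of M_n(C[x_1..x_d]) are encoded by coefficient functions:
  p alpha i j = coefficient of x^alpha in the (i,j) entry (indices i,j < n, variables l < d,
  multi-indices alpha :: nat => nat supported in {..<d}).\<close>

type_synonym mpmat = "(nat \<Rightarrow> nat) \<Rightarrow> nat \<Rightarrow> nat \<Rightarrow> complex"

definition multi_idx :: "nat \<Rightarrow> nat \<Rightarrow> (nat \<Rightarrow> nat) set" where
  "multi_idx d k = {\<alpha>. (\<forall>l. d \<le> l \<longrightarrow> \<alpha> l = 0) \<and> (\<Sum>l<d. \<alpha> l) \<le> k}"

definition Ak :: "nat \<Rightarrow> nat \<Rightarrow> nat \<Rightarrow> mpmat set" where
  "Ak n d k = {p. \<forall>\<alpha> i j. p \<alpha> i j \<noteq> 0 \<longrightarrow> \<alpha> \<in> multi_idx d k \<and> i < n \<and> j < n}"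

definition mpmult :: "nat \<Rightarrow> mpmat \<Rightarrow> mpmat \<Rightarrow> mpmat" where
  "mpmult n p q = (\<lambda>\<alpha> i j. \<Sum>l<n. \<Sum>\<beta>\<in>{\<beta>. \<forall>x. \<beta> x \<le> \<alpha> x}.
       p \<beta> i l * q (\<lambda>x. \<alpha> x - \<beta> x) l j)"

text \<open>Involution: conjugate transpose, variables hermitian.\<close>
definition mpstar :: "mpmat \<Rightarrow> mpmat" where
  "mpstar p = (\<lambda>\<alpha> i j. cnj (p \<alpha> j i))"

definition mpadd :: "mpmat \<Rightarrow> mpmat \<Rightarrow> mpmat" where
  "mpadd p q = (\<lambda>\<alpha> i j. p \<alpha> i j + q \<alpha> i j)"

definition mpscale :: "complex \<Rightarrow> mpmat \<Rightarrow> mpmat" where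
  "mpscale c p = (\<lambda>\<alpha> i j. c * p \<alpha> i j)"

definition lin_on :: "mpmat set \<Rightarrow> (mpmat \<Rightarrow> complex) \<Rightarrow> bool" where
  "lin_on V L \<longleftrightarrow> (\<forall>a\<in>V. \<forall>b\<in>V. L (mpadd a b) = L a + L b) \<and>
                   (\<forall>c. \<forall>a\<in>V. L (mpscale c a) = c * L a)"

definition positive_on :: "nat \<Rightarrow> mpmat set \<Rightarrow> (mpmat \<Rightarrow> complex) \<Rightarrow> bool" where
  "positive_on n C L \<longleftrightarrow> (\<forall>a\<in>C. Im (L (mpmult n (mpstar a) a)) = 0 \<and>
                                    Re (L (mpmult n (mpstar a) a)) \<ge> 0)"

definition kernelL :: "nat \<Rightarrow> mpmat set \<Rightarrow> (mpmat \<Rightarrow> complex) \<Rightarrow> mpmat set" where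
  "kernelL n C L = {a\<in>C. \<forall>b\<in>C. L (mpmult n (mpstar b) a) = 0}"

definition flat_ext :: "nat \<Rightarrow> mpmat set \<Rightarrow> mpmat set \<Rightarrow> (mpmat \<Rightarrow> complex) \<Rightarrow> bool" where
  "flat_ext n B C L \<longleftrightarrow> (\<forall>c\<in>C. \<exists>b\<in>B. \<exists>k\<in>kernelL n C L. c = mpadd b k)"

definition mpeval :: "nat \<Rightarrow> nat \<Rightarrow> mpmat \<Rightarrow> nat \<Rightarrow> nat \<Rightarrow> (nat \<Rightarrow> real) \<Rightarrow> complex" where
  "mpeval d k p i j t = (\<Sum>\<alpha>\<in>multi_idx d k. p \<alpha> i j * (\<Prod>l<d. complex_of_real (t l) ^ \<alpha> l))"

end

theory Submission
  imports Defs "HOL-Library.Function_Algebras" "HOL-Library.FuncSet" "HOL-Computational_Algebra.Fundamental_Theorem_Algebra"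
begin


locale core = vector_space scale
  for scale :: "complex \<Rightarrow> 'v::ab_group_add \<Rightarrow> 'v" (infixr \<open>*s\<close> 75) +
  fixes V F :: "'v set" and h :: "'v \<Rightarrow> 'v \<Rightarrow> complex" and T :: "nat \<Rightarrow> 'v \<Rightarrow> 'v" and d :: nat
  assumes V_sub: "subspace V" and F_fin: "finite F" and V_span: "V \<subseteq> span F"
    and hadd: "a \<in> V \<Longrightarrow> b \<in> V \<Longrightarrow> c \<in> V \<Longrightarrow> h (a + b) c = h a c + h b c"
    and hscale: "a \<in> V \<Longrightarrow> c \<in> V \<Longrightarrow> h (s *s a) c = s * h a c"
    and hsym: "a \<in> V \<Longrightarrow> b \<in> V \<Longrightarrow> h a b = cnj (h b a)"
    and hpos: "a \<in> V \<Longrightarrow> 0 \<le> Re (h a a)"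
    and Tadd: "T l (a + b) = T l a + T l b"
    and Tscale: "T l (s *s a) = s *s T l a"
    and TV: "l < d \<Longrightarrow> a \<in> V \<Longrightarrow> T l a \<in> V"
    and Tsa: "l < d \<Longrightarrow> a \<in> V \<Longrightarrow> b \<in> V \<Longrightarrow> h (T l a) b = h a (T l b)"
    and Tcomm: "l < d \<Longrightarrow> k < d \<Longrightarrow> a \<in> V \<Longrightarrow> b \<in> V \<Longrightarrow> h (T l (T k a)) b = h (T k (T l a)) b"
begin

lemma V0: "0 \<in> V" using V_sub subspace_0 by blast
lemma Vadd: "a \<in> V \<Longrightarrow> b \<in> V \<Longrightarrow> a + b \<in> V" using V_sub subspace_add by blast
lemma Vscale: "a \<in> V \<Longrightarrow> s *s a \<in> V" using V_sub subspace_scale by blast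
lemma Vdiff: "a \<in> V \<Longrightarrow> b \<in> V \<Longrightarrow> a - b \<in> V" using V_sub subspace_diff by blast
lemma Vsum: "(\<And>i. i \<in> I \<Longrightarrow> f i \<in> V) \<Longrightarrow> sum f I \<in> V" using V_sub subspace_sum by blast

lemma hzero1: "c \<in> V \<Longrightarrow> h 0 c = 0"
  using hadd[OF V0 V0, of c] by simp
lemma hzero2: "c \<in> V \<Longrightarrow> h c 0 = 0"
  using hsym[OF V0, of c] hzero1 by simp
lemma hadd2: "a \<in> V \<Longrightarrow> b \<in> V \<Longrightarrow> c \<in> V \<Longrightarrow> h c (a + b) = h c a + h c b"
  by (metis Vadd complex_cnj_add hadd hsym)
lemma hscale2: "a \<in> V \<Longrightarrow> c \<in> V \<Longrightarrow> h c (s *s a) = cnj s * h c a"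
  by (metis Vscale complex_cnj_mult hscale hsym)
lemma hneg: "a \<in> V \<Longrightarrow> c \<in> V \<Longrightarrow> h (- a) c = - h a c"
  using hscale[of a c "-1"] by simp
lemma hdiff: "a \<in> V \<Longrightarrow> b \<in> V \<Longrightarrow> c \<in> V \<Longrightarrow> h (a - b) c = h a c - h b c"
  by (metis V_sub diff_conv_add_uminus hadd hneg subspace_neg)
lemma hneg2: "a \<in> V \<Longrightarrow> c \<in> V \<Longrightarrow> h c (- a) = - h c a"
  using hscale2[of a c "-1"] by simp
lemma hdiff2: "a \<in> V \<Longrightarrow> b \<in> V \<Longrightarrow> c \<in> V \<Longrightarrow> h c (a - b) = h c a - h c b"
  by (metis V_sub diff_conv_add_uminus hadd2 hneg2 subspace_neg)
lemma hsum1: "(\<And>i. i \<in> I \<Longrightarrow> f i \<in> V) \<Longrightarrow> c \<in> V \<Longrightarrow> h (sum f I) c = (\<Sum>i\<in>I. h (f i) c)"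
proof (induction I rule: infinite_finite_induct)
  case (infinite A) then show ?case by (simp add: hzero1)
next
  case empty then show ?case by (simp add: hzero1)
next
  case (insert x F) then show ?case by (simp add: hadd Vsum)
qed
lemma hsum2: "(\<And>i. i \<in> I \<Longrightarrow> f i \<in> V) \<Longrightarrow> c \<in> V \<Longrightarrow> h c (sum f I) = (\<Sum>i\<in>I. h c (f i))"
proof (induction I rule: infinite_finite_induct)
  case (infinite A) then show ?case by (simp add: hzero2)
next
  case empty then show ?case by (simp add: hzero2)
next
  case (insert x F) then show ?case by (simp add: hadd2 Vsum)
qed
lemma hreal: "a \<in> V \<Longrightarrow> Im (h a a) = 0"
  using hsym[of a a] by (metis cnj.simps(2) neg_equal_zero)

lemma T0: "T l 0 = 0"
  using Tadd[of l 0 0] by simp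
lemma Tdiff: "T l (a - b) = T l a - T l b"
  using Tadd[of l "a - b" b] by (simp add: algebra_simps)
lemma Tsum: "T l (sum f I) = (\<Sum>i\<in>I. T l (f i))"
  by (induction I rule: infinite_finite_induct) (auto simp: T0 Tadd)

lemma null_orth:
  assumes a: "a \<in> V" and b: "b \<in> V" and aa: "h a a = 0"
  shows "h a b = 0"
proof (rule ccontr)
  assume nz: "h a b \<noteq> 0"
  define c where "c = h a b"
  define R where "R = Re (h b b)"
  have R0: "R \<ge> 0" using hpos[OF b] R_def by simp
  define t :: real where "t = 1 / (R + 1)"
  have t0: "t > 0" using R0 t_def by simp
  define lam where "lam = - (of_real t * c)"
  have x: "a + lam *s b \<in> V" using a b Vadd Vscale by blast
  have "h (a + lam *s b) (a + lam *s b) = h a a + lam * h b a + cnj lam * h a b + lam * cnj lam * h b b"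
  proof -
    have lb: "lam *s b \<in> V" using b Vscale by blast
    have "h (a + lam *s b) (a + lam *s b) = h a (a + lam *s b) + h (lam *s b) (a + lam *s b)"
      using hadd[OF a lb x] .
    also have "\<dots> = (h a a + h a (lam *s b)) + (h (lam *s b) a + h (lam *s b) (lam *s b))"
      using hadd2[OF a lb a] hadd2[OF a lb lb] by simp
    also have "\<dots> = (h a a + cnj lam * h a b) + (lam * h b a + lam * (cnj lam * h b b))"
      using hscale2[OF b a] hscale[OF b a] hscale[OF b lb] hscale2[OF b b] by simp
    finally show ?thesis by (simp add: algebra_simps)
  qed
  also have "\<dots> = - of_real t * c * cnj c - of_real t * cnj c * c + of_real (t*t) * c * cnj c * h b b"
    using hsym[OF b a] aa by (simp add: lam_def c_def algebra_simps)
  also have "\<dots> = of_real ((cmod c)^2 * (t * t * R - 2 * t))"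
  proof -
    have hb: "h b b = of_real R" using hreal[OF b] R_def by (simp add: complex_eq_iff)
    have cc: "c * cnj c = of_real ((cmod c)^2)" using complex_norm_square[of c] by simp
    have cc2: "cnj c * c = of_real ((cmod c)^2)" using complex_norm_square[of c] by (simp add: mult.commute)
    have "- of_real t * c * cnj c - of_real t * cnj c * c + of_real (t*t) * c * cnj c * h b b
        = of_real t * (- 2 * (c * cnj c)) + of_real (t*t) * (c*cnj c) * of_real R"
      unfolding hb by (simp add: algebra_simps)
    also have "\<dots> = of_real (t * (- 2 * (cmod c)^2) + (t*t) * (cmod c)^2 * R)"
      unfolding cc by simp
    finally show ?thesis by (simp add: algebra_simps)
  qed
  finally have eq: "Re (h (a + lam *s b) (a + lam *s b)) = (cmod c)^2 * (t * t * R - 2 * t)"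
    by simp
  have "t * R < 1" using R0 unfolding t_def by (simp add: field_simps)
  then have "t * (t * R - 2) < 0" using t0 by (intro mult_pos_neg) auto
  then have "t * t * R - 2 * t < 0" by (simp add: algebra_simps)
  moreover have "(cmod c)^2 > 0" using nz c_def by simp
  ultimately have "Re (h (a + lam *s b) (a + lam *s b)) < 0" using eq by (simp add: mult_pos_neg)
  with hpos[OF x] show False by simp
qed

definition opoly :: "nat \<Rightarrow> complex poly \<Rightarrow> 'v \<Rightarrow> 'v" where
  "opoly l p w = (\<Sum>i\<le>degree p. coeff p i *s (T l ^^ i) w)"

lemma opoly_bound:
  assumes "degree p \<le> K"
  shows "opoly l p w = (\<Sum>i\<le>K. coeff p i *s (T l ^^ i) w)"
  unfolding opoly_def
proof (rule sum.mono_neutral_left)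
  show "\<forall>i\<in>{..K} - {..degree p}. coeff p i *s (T l ^^ i) w = 0"
    by (auto simp: coeff_eq_0)
qed (use assms in auto)

lemma opoly_add: "opoly l (p + q) w = opoly l p w + opoly l q w"
proof -
  define K where "K = max (degree p) (degree q)"
  have "degree (p + q) \<le> K" unfolding K_def by (rule degree_add_le) auto
  then show ?thesis
    by (simp add: opoly_bound[of _ K] K_def sum.distrib scale_left_distrib)
qed

lemma opoly_smult: "opoly l (smult c p) w = c *s opoly l p w"
proof -
  have dd: "degree (smult c p) \<le> degree p" by (rule degree_smult_le)
  show ?thesis by (simp add: opoly_bound[OF dd] opoly_def scale_sum_right)
qed

lemma opoly_pCons0: "opoly l (pCons 0 p) w = T l (opoly l p w)"
proof -
  have "opoly l (pCons 0 p) w = (\<Sum>i\<le>Suc (degree p). coeff (pCons 0 p) i *s (T l ^^ i) w)"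
    by (rule opoly_bound) (rule degree_pCons_le)
  also have "\<dots> = (\<Sum>i\<le>degree p. coeff p i *s (T l ^^ Suc i) w)"
    by (subst sum.atMost_Suc_shift) simp
  also have "\<dots> = T l (opoly l p w)"
    by (simp add: opoly_def Tsum Tscale)
  finally show ?thesis .
qed

lemma opoly_lin: "opoly l ([:-a, 1:] * q) w = T l (opoly l q w) - a *s opoly l q w"
proof -
  have eq: "[:-a, 1:] * q = pCons 0 q + smult (-a) q" by (simp add: mult_pCons_left)
  show ?thesis unfolding eq opoly_add opoly_smult opoly_pCons0 by simp
qed

fun zr :: "nat \<Rightarrow> (nat \<Rightarrow> complex) \<Rightarrow> nat \<Rightarrow> 'v \<Rightarrow> 'v" where
  "zr l rt 0 w = w"
| "zr l rt (Suc i) w = T l (zr l rt i w) - rt i *s zr l rt i w"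

lemma opoly_one: "opoly l 1 w = w"
  by (simp add: opoly_def)

lemma opoly_prod: "opoly l (\<Prod>i<D. [:-rt i, 1:]) w = zr l rt D w"
proof (induction D)
  case 0 then show ?case by (simp add: opoly_one)
next
  case (Suc D)
  have "(\<Prod>i<Suc D. [:-rt i, 1:]) = [:-rt D, 1:] * (\<Prod>i<D. [:-rt i, 1:])"
    by (simp add: lessThan_Suc mult.commute)
  then show ?case using Suc by (simp only: opoly_lin zr.simps)
qed

lemma zr_in:
  assumes W: "subspace W" and inv: "\<forall>a\<in>W. T l a \<in> W" and w: "w \<in> W"
  shows "zr l rt i w \<in> W"
  by (induction i) (auto simp: w inv intro!: subspace_diff[OF W] subspace_scale[OF W])

lemma pow_in:
  assumes inv: "\<forall>a\<in>W. T l a \<in> W" and w: "w \<in> W"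
  shows "(T l ^^ i) w \<in> W"
  by (induction i) (auto simp: w inv)

lemma descent:
  assumes "h w w \<noteq> 0" "h (zr l rt D w) (zr l rt D w) = 0"
  shows "\<exists>i<D. h (zr l rt i w) (zr l rt i w) \<noteq> 0 \<and> h (zr l rt (Suc i) w) (zr l rt (Suc i) w) = 0"
  using assms
proof (induction D)
  case 0 then show ?case by simp
next
  case (Suc D)
  show ?case
  proof (cases "h (zr l rt D w) (zr l rt D w) = 0")
    case True
    then obtain i where "i < D" "h (zr l rt i w) (zr l rt i w) \<noteq> 0 \<and> h (zr l rt (Suc i) w) (zr l rt (Suc i) w) = 0"
      using Suc by blast
    then show ?thesis by (intro exI[of _ i]) auto
  next
    case False
    then show ?thesis using Suc.prems by (intro exI[of _ D]) auto
  qed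
qed

lemma dep_powers:
  assumes WV: "W \<subseteq> V" and inv: "\<forall>a\<in>W. T l a \<in> W" and w: "w \<in> W"
  shows "\<exists>c. (\<exists>i\<le>card F. c i \<noteq> 0) \<and> (\<Sum>i\<le>card F. c i *s (T l ^^ i) w) = 0"
proof (cases "inj_on (\<lambda>i. (T l ^^ i) w) {..card F}")
  case False
  then obtain i j where ij: "i \<le> card F" "j \<le> card F" "i \<noteq> j" "(T l ^^ i) w = (T l ^^ j) w"
    unfolding inj_on_def by auto
  define c where "c k = (if k = i then 1 else if k = j then -1 else (0::complex))" for k
  have "\<And>k. c k *s (T l ^^ k) w = (if k = i then (T l ^^ k) w else 0) + (if k = j then - (T l ^^ k) w else 0)"
    using ij(3) by (auto simp: c_def)
  then have "(\<Sum>k\<le>card F. c k *s (T l ^^ k) w) = (T l ^^ i) w - (T l ^^ j) w"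
    using ij by (simp add: sum.distrib sum.delta)
  then show ?thesis using ij by (intro exI[of _ c]) (auto simp: c_def)
next
  case True
  define S where "S = (\<lambda>i. (T l ^^ i) w) ` {..card F}"
  have cS: "card S = Suc (card F)" using True by (simp add: S_def card_image)
  have SW: "S \<subseteq> W" using pow_in[OF inv w] by (auto simp: S_def)
  have "dependent S"
  proof (rule ccontr)
    assume "\<not> dependent S"
    then have "card S \<le> card F" using independent_span_bound[OF F_fin, of S] SW WV V_span by auto
    with cS show False by simp
  qed
  then obtain t u where tu: "finite t" "t \<subseteq> S" "(\<Sum>v\<in>t. u v *s v) = 0" "\<exists>v\<in>t. u v \<noteq> 0"
    unfolding dependent_explicit by blast
  define c where "c i = (if (T l ^^ i) w \<in> t then u ((T l ^^ i) w) else 0)" for i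
  define I where "I = {i\<in>{..card F}. (T l ^^ i) w \<in> t}"
  have "(\<Sum>i\<le>card F. c i *s (T l ^^ i) w) = (\<Sum>i\<in>I. u ((T l ^^ i) w) *s (T l ^^ i) w)"
    by (rule sum.mono_neutral_cong_right) (auto simp: I_def c_def)
  also have "\<dots> = (\<Sum>v\<in>t. u v *s v)"
  proof -
    have inj: "inj_on (\<lambda>i. (T l ^^ i) w) I" using True by (rule inj_on_subset) (auto simp: I_def)
    have im: "(\<lambda>i. (T l ^^ i) w) ` I = t" using tu(2) by (auto simp: I_def S_def)
    show ?thesis using sum.reindex[OF inj, of "\<lambda>v. u v *s v"] im by simp
  qed
  finally have s0: "(\<Sum>i\<le>card F. c i *s (T l ^^ i) w) = 0" using tu(3) by simp
  obtain v where v: "v \<in> t" "u v \<noteq> 0" using tu(4) by blast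
  then obtain i where "i \<le> card F" "v = (T l ^^ i) w" using tu(2) by (auto simp: S_def)
  then have "c i \<noteq> 0" using v by (auto simp: c_def)
  then show ?thesis using s0 \<open>i \<le> card F\<close> by blast
qed

lemma eig:
  assumes W: "subspace W" and WV: "W \<subseteq> V" and l: "l < d" and inv: "\<forall>a\<in>W. T l a \<in> W"
    and w: "w \<in> W" and ww: "h w w \<noteq> 0"
  shows "\<exists>u\<in>W. h u u \<noteq> 0 \<and> (\<exists>lam. \<forall>v\<in>V. h (T l u) v = lam * h u v)"
proof -
  obtain c where c: "\<exists>i\<le>card F. c i \<noteq> 0" "(\<Sum>i\<le>card F. c i *s (T l ^^ i) w) = 0"
    using dep_powers[OF WV inv w] by blast
  define p where "p = (\<Sum>i\<le>card F. monom (c i) i)"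
  have cp: "coeff p k = (if k \<le> card F then c k else 0)" for k
    by (simp add: p_def coeff_sum coeff_monom)
  have dp: "degree p \<le> card F" by (rule degree_le) (auto simp: cp)
  have p0: "p \<noteq> 0" using c(1) cp by (metis coeff_0)
  have "opoly l p w = 0" using c(2) by (simp add: opoly_bound[OF dp] cp)
  obtain rt where rt: "smult (lead_coeff p) (\<Prod>i<degree p. [:-rt i, 1:]) = p"
    using complex_poly_decompose' by blast
  have "opoly l p w = lead_coeff p *s zr l rt (degree p) w"
    by (subst rt[symmetric]) (simp add: opoly_smult opoly_prod)
  with \<open>opoly l p w = 0\<close> p0 have z0: "zr l rt (degree p) w = 0" by simp
  have "h (zr l rt (degree p) w) (zr l rt (degree p) w) = 0" using z0 hzero1 V0 by simp
  then obtain i where i: "h (zr l rt i w) (zr l rt i w) \<noteq> 0" "h (zr l rt (Suc i) w) (zr l rt (Suc i) w) = 0"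
    using descent[OF ww] by blast
  define u where "u = zr l rt i w"
  have uW: "u \<in> W" using zr_in[OF W inv w] u_def by blast
  then have uV: "u \<in> V" using WV by blast
  have zV: "zr l rt (Suc i) w \<in> V" using zr_in[OF W inv w] WV by blast
  have "\<forall>v\<in>V. h (T l u) v = rt i * h u v"
  proof
    fix v assume v: "v \<in> V"
    have "h (zr l rt (Suc i) w) v = 0" using null_orth[OF zV v i(2)] .
    then have "h (T l u - rt i *s u) v = 0" by (simp add: u_def)
    then show "h (T l u) v = rt i * h u v"
      using hdiff[OF TV[OF l uV] Vscale[OF uV] v] hscale[OF uV v] by simp
  qed
  then show ?thesis using uW i(1) u_def by blast
qed

lemma joint_eig:
  assumes "k \<le> d" "subspace W" "W \<subseteq> V" "\<forall>l<d. \<forall>a\<in>W. T l a \<in> W" "w \<in> W" "h w w \<noteq> 0"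
  shows "\<exists>u\<in>W. h u u \<noteq> 0 \<and> (\<forall>l<k. \<exists>lam. \<forall>v\<in>V. h (T l u) v = lam * h u v)"
  using assms
proof (induction k arbitrary: W w)
  case 0 then show ?case by blast
next
  case (Suc k)
  have kd: "k < d" using Suc.prems by simp
  obtain u0 lam where u0: "u0 \<in> W" "h u0 u0 \<noteq> 0" "\<forall>v\<in>V. h (T k u0) v = lam * h u0 v"
    using eig[OF Suc.prems(2,3) kd] Suc.prems(4,5,6) kd by blast
  define E where "E = {x\<in>W. \<forall>v\<in>V. h (T k x) v = lam * h x v}"
  have EV: "E \<subseteq> V" using Suc.prems(3) by (auto simp: E_def)
  have TkV: "x \<in> V \<Longrightarrow> T k x \<in> V" for x using TV[OF kd] .
  have subE: "subspace E"
    unfolding subspace_def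
  proof (intro conjI ballI allI)
    show "0 \<in> E" using Suc.prems(2) subspace_0 by (auto simp: E_def T0 hzero1)
  next
    fix x y assume x: "x \<in> E" and y: "y \<in> E"
    then have xV: "x \<in> V" and yV: "y \<in> V" using EV by auto
    have "x + y \<in> W" using x y Suc.prems(2) subspace_add by (auto simp: E_def)
    moreover have "\<forall>v\<in>V. h (T k (x + y)) v = lam * h (x + y) v"
      using x y xV yV by (auto simp: E_def Tadd hadd TkV algebra_simps)
    ultimately show "x + y \<in> E" by (simp add: E_def)
  next
    fix c x assume x: "x \<in> E"
    then have xV: "x \<in> V" using EV by auto
    have "c *s x \<in> W" using x Suc.prems(2) subspace_scale by (auto simp: E_def)
    moreover have "\<forall>v\<in>V. h (T k (c *s x)) v = lam * h (c *s x) v"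
      using x xV by (auto simp: E_def Tscale hscale TkV algebra_simps)
    ultimately show "c *s x \<in> E" by (simp add: E_def)
  qed
  have invE: "\<forall>l<d. \<forall>a\<in>E. T l a \<in> E"
  proof (intro allI impI ballI)
    fix l a assume l: "l < d" and a: "a \<in> E"
    then have aV: "a \<in> V" using EV by auto
    have "T l a \<in> W" using Suc.prems(4) a l by (auto simp: E_def)
    moreover have "\<forall>v\<in>V. h (T k (T l a)) v = lam * h (T l a) v"
    proof
      fix v assume v: "v \<in> V"
      have "h (T k (T l a)) v = h (T l (T k a)) v" using Tcomm[OF kd l aV v] .
      also have "\<dots> = h (T k a) (T l v)" using Tsa[OF l TkV[OF aV] v] .
      also have "\<dots> = lam * h a (T l v)" using a TV[OF l v] by (auto simp: E_def)
      also have "\<dots> = lam * h (T l a) v" using Tsa[OF l aV v] by simp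
      finally show "h (T k (T l a)) v = lam * h (T l a) v" .
    qed
    ultimately show "T l a \<in> E" by (simp add: E_def)
  qed
  have u0E: "u0 \<in> E" using u0 by (simp add: E_def)
  obtain u where u: "u \<in> E" "h u u \<noteq> 0" "\<forall>l<k. \<exists>lam. \<forall>v\<in>V. h (T l u) v = lam * h u v"
    using Suc.IH[OF _ subE EV invE u0E u0(2)] Suc.prems(1) by auto
  have "\<forall>l<Suc k. \<exists>lam. \<forall>v\<in>V. h (T l u) v = lam * h u v"
    using u(1,3) by (auto simp: E_def less_Suc_eq)
  moreover have "u \<in> W" using u(1) by (simp add: E_def)
  ultimately show ?case using u(2) by blast
qed

definition ONF :: "nat \<Rightarrow> (nat \<Rightarrow> 'v) \<Rightarrow> (nat \<Rightarrow> nat \<Rightarrow> real) \<Rightarrow> bool" where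
  "ONF r e t \<longleftrightarrow> (\<forall>i<r. e i \<in> V) \<and> (\<forall>i<r. \<forall>j<r. h (e i) (e j) = (if i = j then 1 else 0)) \<and>
     (\<forall>i<r. \<forall>l<d. \<forall>v\<in>V. h v (T l (e i)) = of_real (t i l) * h v (e i))"

lemma ONF_bound:
  assumes "ONF r e t" shows "r \<le> card F"
proof -
  have eV: "\<And>i. i < r \<Longrightarrow> e i \<in> V" and on: "\<And>i j. i < r \<Longrightarrow> j < r \<Longrightarrow> h (e i) (e j) = (if i = j then 1 else 0)"
    using assms by (auto simp: ONF_def)
  have inj: "inj_on e {..<r}"
  proof
    fix i j assume i: "i \<in> {..<r}" and j: "j \<in> {..<r}" and eq: "e i = e j"
    show "i = j"
    proof (rule ccontr)
      assume "i \<noteq> j"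
      then have "h (e i) (e j) = 0" using on i j by auto
      moreover have "h (e i) (e j) = 1" using on[of i i] i eq by auto
      ultimately show False by simp
    qed
  qed
  have ind: "independent (e ` {..<r})"
    unfolding dependent_explicit
  proof (rule notI, elim exE conjE bexE)
    fix tt u v assume tt: "finite tt" "tt \<subseteq> e ` {..<r}" "(\<Sum>v\<in>tt. u v *s v) = 0" "v \<in> tt" "u v \<noteq> 0"
    obtain j where j: "j < r" "v = e j" using tt by auto
    have ttV: "\<And>x. x \<in> tt \<Longrightarrow> x \<in> V" using tt(2) eV by auto
    have "0 = h (\<Sum>x\<in>tt. u x *s x) (e j)" using tt(3) hzero1 eV j by simp
    also have "\<dots> = (\<Sum>x\<in>tt. u x * h x (e j))"
      using ttV eV[OF j(1)] by (simp add: hsum1 Vscale hscale)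
    also have "\<dots> = (\<Sum>x\<in>tt. if x = v then u x else 0)"
    proof (rule sum.cong)
      fix x assume x: "x \<in> tt"
      then obtain i where i: "i < r" "x = e i" using tt by auto
      show "u x * h x (e j) = (if x = v then u x else 0)"
        using on[OF i(1) j(1)] i j inj by (auto simp: inj_on_def)
    qed simp
    also have "\<dots> = u v" using tt by simp
    finally show False using tt by simp
  qed
  have "e ` {..<r} \<subseteq> span F" using eV V_span by auto
  then have "card (e ` {..<r}) \<le> card F" using independent_span_bound[OF F_fin ind] by auto
  then show ?thesis using inj by (simp add: card_image)
qed

lemma complete_if_null:
  assumes onf: "ONF r e t" and nul: "\<forall>w\<in>V. (\<forall>i<r. h w (e i) = 0) \<longrightarrow> h w w = 0"
  shows "\<forall>v\<in>V. \<forall>w\<in>V. h v w = (\<Sum>i<r. h v (e i) * h (e i) w)"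
proof (intro ballI)
  fix v w assume v: "v \<in> V" and w: "w \<in> V"
  have eV: "\<And>i. i < r \<Longrightarrow> e i \<in> V" and on: "\<And>i j. i < r \<Longrightarrow> j < r \<Longrightarrow> h (e i) (e j) = (if i = j then 1 else 0)"
    using onf by (auto simp: ONF_def)
  define s where "s = (\<Sum>i<r. h w (e i) *s e i)"
  have sV: "s \<in> V" unfolding s_def by (rule Vsum) (simp add: Vscale eV)
  define w' where "w' = w - s"
  have w'V: "w' \<in> V" using w sV Vdiff w'_def by blast
  have "\<forall>j<r. h w' (e j) = 0"
  proof (intro allI impI)
    fix j assume j: "j < r"
    have "h s (e j) = (\<Sum>i<r. h (h w (e i) *s e i) (e j))"
      unfolding s_def by (rule hsum1) (auto intro: Vscale eV j)
    also have "\<dots> = (\<Sum>i<r. h w (e i) * h (e i) (e j))"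
      by (rule sum.cong) (auto simp: hscale eV j)
    also have "\<dots> = (\<Sum>i<r. if i = j then h w (e i) else 0)"
      by (rule sum.cong) (auto simp: on j)
    also have "\<dots> = h w (e j)" using j by simp
    finally show "h w' (e j) = 0" using hdiff[OF w sV eV[OF j]] w'_def by simp
  qed
  then have "h w' w' = 0" using nul w'V by blast
  then have "h w' v = 0" using null_orth[OF w'V v] by simp
  then have hv0: "h v w' = 0" using hsym[OF v w'V] by simp
  have "w = w' + s" using w'_def by simp
  then have "h v w = h v w' + h v s" using hadd2[OF w'V sV v] by simp
  also have "\<dots> = (\<Sum>i<r. h v (h w (e i) *s e i))"
    unfolding hv0 s_def by (simp, rule hsum2) (auto intro: Vscale eV v)
  also have "\<dots> = (\<Sum>i<r. cnj (h w (e i)) * h v (e i))"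
    by (rule sum.cong) (auto simp: hscale2 eV v)
  also have "\<dots> = (\<Sum>i<r. h v (e i) * h (e i) w)"
    using hsym[OF w] eV by (simp add: mult.commute)
  finally show "h v w = (\<Sum>i<r. h v (e i) * h (e i) w)" .
qed

theorem core_decomp:
  "\<exists>r e t. ONF r e t \<and> (\<forall>v\<in>V. \<forall>w\<in>V. h v w = (\<Sum>i<r. h v (e i) * h (e i) w))"
proof -
  define R where "R = {r. \<exists>e t. ONF r e t}"
  have finR: "finite R" using ONF_bound by (intro finite_subset[of R "{..card F}"]) (auto simp: R_def)
  have "0 \<in> R" by (auto simp: R_def ONF_def)
  define r0 where "r0 = Max R"
  have "r0 \<in> R" unfolding r0_def using finR \<open>0 \<in> R\<close> by (intro Max_in) auto
  then obtain e t where onf: "ONF r0 e t" by (auto simp: R_def)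
  have eV: "\<And>i. i < r0 \<Longrightarrow> e i \<in> V" and on: "\<And>i j. i < r0 \<Longrightarrow> j < r0 \<Longrightarrow> h (e i) (e j) = (if i = j then 1 else 0)"
    and eig0: "\<And>i l v. i < r0 \<Longrightarrow> l < d \<Longrightarrow> v \<in> V \<Longrightarrow> h v (T l (e i)) = of_real (t i l) * h v (e i)"
    using onf by (auto simp: ONF_def)
  have nul: "\<forall>w\<in>V. (\<forall>i<r0. h w (e i) = 0) \<longrightarrow> h w w = 0"
  proof (rule ccontr)
    assume "\<not> ?thesis"
    then obtain w where w: "w \<in> V" "\<forall>i<r0. h w (e i) = 0" "h w w \<noteq> 0" by blast
    define W where "W = {x\<in>V. \<forall>i<r0. h x (e i) = 0}"
    have subW: "subspace W"
      unfolding subspace_def W_def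
      using V0 eV by (auto simp: hzero1 Vadd Vscale hadd hscale)
    have invW: "\<forall>l<d. \<forall>a\<in>W. T l a \<in> W"
      using eV eig0 by (auto simp: W_def TV Tsa)
    obtain u where u: "u \<in> W" "h u u \<noteq> 0" "\<forall>l<d. \<exists>lam. \<forall>v\<in>V. h (T l u) v = lam * h u v"
      using joint_eig[OF order_refl subW _ invW, of w] w by (auto simp: W_def)
    obtain lam where lam: "\<And>l v. l < d \<Longrightarrow> v \<in> V \<Longrightarrow> h (T l u) v = lam l * h u v"
      using u(3) by metis
    have uV: "u \<in> V" using u(1) by (simp add: W_def)
    define hu where "hu = Re (h u u)"
    have huc: "h u u = of_real hu" using hreal[OF uV] hu_def by (simp add: complex_eq_iff)
    have "hu \<noteq> 0" using u(2) huc by auto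
    then have hu0: "hu > 0" using hpos[OF uV] hu_def by linarith
    have lamreal: "lam l = of_real (Re (lam l))" if l: "l < d" for l
    proof -
      have "h (T l u) u = lam l * h u u" using lam[OF l uV] .
      moreover have "h (T l u) u = cnj (h (T l u) u)"
        using Tsa[OF l uV uV] hsym[OF uV TV[OF l uV]] by simp
      ultimately have "lam l * of_real hu = cnj (lam l) * of_real hu" using huc by simp
      then have "lam l = cnj (lam l)" using hu0 by simp
      then show ?thesis by (simp add: complex_eq_iff)
    qed
    define sc where "sc = complex_of_real (1 / sqrt hu)"
    define e' where "e' = sc *s u"
    have e'V: "e' \<in> V" using uV Vscale e'_def by blast
    define ee where "ee = e(r0 := e')"
    define tt where "tt = t(r0 := (\<lambda>l. Re (lam l)))"
    have he'e': "h e' e' = 1"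
    proof -
      have 1: "h e' e' = sc * cnj sc * h u u" using uV by (simp add: e'_def hscale hscale2 Vscale)
      have q: "(1 / sqrt hu) * (1 / sqrt hu) * hu = 1" using hu0
        by (simp add: field_simps)
      have "sc * cnj sc * h u u = of_real ((1 / sqrt hu) * (1 / sqrt hu) * hu)"
        unfolding sc_def huc by (simp only: complex_cnj_complex_of_real of_real_mult)
      then show ?thesis using 1 q by simp
    qed
    have orth: "i < r0 \<Longrightarrow> h e' (e i) = 0" for i
      using u(1) uV eV by (simp add: e'_def hscale W_def)
    have orth2: "i < r0 \<Longrightarrow> h (e i) e' = 0" for i
      using orth hsym eV e'V by (metis complex_cnj_zero)
    have eig': "l < d \<Longrightarrow> v \<in> V \<Longrightarrow> h v (T l e') = of_real (Re (lam l)) * h v e'" for l v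
    proof -
      assume l: "l < d" and v: "v \<in> V"
      have "h v (T l u) = cnj (h (T l u) v)" using hsym[OF v TV[OF l uV]] .
      also have "\<dots> = cnj (lam l) * h v u" using lam[OF l v] hsym[OF uV v] by simp
      also have "\<dots> = lam l * h v u" using lamreal[OF l] by (metis complex_cnj_complex_of_real)
      finally have a: "h v (T l u) = lam l * h v u" .
      have "h v (T l e') = cnj sc * h v (T l u)"
        using TV[OF l uV] v by (simp add: e'_def Tscale hscale2)
      also have "\<dots> = lam l * h v e'" using a uV v by (simp add: e'_def hscale2)
      finally show ?thesis using lamreal[OF l] by simp
    qed
    have "ONF (Suc r0) ee tt"
      unfolding ONF_def
    proof (intro conjI allI impI ballI)
      fix i assume "i < Suc r0" then show "ee i \<in> V" using eV e'V by (auto simp: ee_def less_Suc_eq)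
    next
      fix i j assume "i < Suc r0" "j < Suc r0"
      then show "h (ee i) (ee j) = (if i = j then 1 else 0)"
        using on orth orth2 he'e' by (auto simp: ee_def less_Suc_eq)
    next
      fix i l v assume "i < Suc r0" "l < d" "v \<in> V"
      then show "h v (T l (ee i)) = complex_of_real (tt i l) * h v (ee i)"
        using eig0 eig' by (auto simp: ee_def tt_def less_Suc_eq)
    qed
    then have "Suc r0 \<in> R" by (auto simp: R_def)
    then have "Suc r0 \<le> r0" using finR r0_def by auto
    then show False by simp
  qed
  show ?thesis using complete_if_null[OF onf nul] onf by blast
qed

end



definition E :: "(nat\<Rightarrow>nat) \<Rightarrow> nat \<Rightarrow> nat \<Rightarrow> mpmat" where
  "E \<beta> i j = (\<lambda>\<alpha> i' j'. if \<alpha> = \<beta> \<and> i' = i \<and> j' = j then 1 else 0)"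

definition xm :: "nat \<Rightarrow> mpmat \<Rightarrow> mpmat" where
  "xm l p = (\<lambda>\<alpha> i j. if 0 < \<alpha> l then p (\<alpha>(l := \<alpha> l - 1)) i j else 0)"

definition Sk :: "nat \<Rightarrow> nat \<Rightarrow> nat \<Rightarrow> ((nat\<Rightarrow>nat) \<times> nat \<times> nat) set" where
  "Sk n d K = multi_idx d K \<times> {..<n} \<times> {..<n}"

lemma sum_app: "(\<Sum>x\<in>A. f x) \<alpha> i j = (\<Sum>x\<in>A. f x \<alpha> i j)" for f :: "'a \<Rightarrow> mpmat"
  by (induction A rule: infinite_finite_induct) auto

lemma finite_le:
  assumes "\<forall>x\<ge>D. (\<alpha>::nat\<Rightarrow>nat) x = 0"
  shows "finite {\<beta>. \<forall>x. \<beta> x \<le> \<alpha> x}"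
proof -
  let ?S = "{\<beta>::nat\<Rightarrow>nat. \<forall>x. \<beta> x \<le> \<alpha> x}"
  have inj: "inj_on (\<lambda>\<beta>. restrict \<beta> {..<D}) ?S"
  proof
    fix \<beta> \<beta>' assume b: "\<beta> \<in> ?S" "\<beta>' \<in> ?S" and eq: "restrict \<beta> {..<D} = restrict \<beta>' {..<D}"
    show "\<beta> = \<beta>'"
    proof
      fix x show "\<beta> x = \<beta>' x"
      proof (cases "x < D")
        case True
        have "restrict \<beta> {..<D} x = restrict \<beta>' {..<D} x" using eq by simp
        then show ?thesis using True by simp
      next
        case False then show ?thesis using b assms by (metis le_zero_eq mem_Collect_eq not_less)
      qed
    qed
  qed
  have "(\<lambda>\<beta>. restrict \<beta> {..<D}) ` ?S \<subseteq> PiE {..<D} (\<lambda>x. {..\<alpha> x})" by (intro image_subsetI, subst restrict_PiE_iff) simp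
  then have "finite ((\<lambda>\<beta>. restrict \<beta> {..<D}) ` ?S)"
    by (rule finite_subset) (intro finite_PiE, auto)
  then show ?thesis using finite_imageD inj by blast
qed

lemma finite_multi_idx: "finite (multi_idx d K)"
proof -
  have "multi_idx d K \<subseteq> {\<beta>. \<forall>x. \<beta> x \<le> (\<lambda>x. if x < d then K else 0) x}"
  proof
    fix \<beta> assume b: "\<beta> \<in> multi_idx d K"
    have "\<beta> x \<le> (if x < d then K else 0)" for x
    proof (cases "x < d")
      case True
      have "\<beta> x \<le> sum \<beta> {..<d}" using True by (intro member_le_sum) auto
      then show ?thesis using b True by (simp add: multi_idx_def)
    next
      case False then show ?thesis using b by (simp add: multi_idx_def)
    qed
    then show "\<beta> \<in> {\<beta>. \<forall>x. \<beta> x \<le> (\<lambda>x. if x < d then K else 0) x}" by simp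
  qed
  then show ?thesis by (rule finite_subset) (rule finite_le[of d], auto)
qed

lemma finite_Sk: "finite (Sk n d K)"
  by (simp add: Sk_def finite_multi_idx)

lemma Ak_zero: "p \<in> Ak n d K \<Longrightarrow> (\<alpha>, i, j) \<notin> Sk n d K \<Longrightarrow> p \<alpha> i j = 0"
  by (auto simp: Ak_def Sk_def)

lemma expand:
  assumes "p \<in> Ak n d K"
  shows "p = (\<Sum>(\<alpha>,i,j)\<in>Sk n d K. mpscale (p \<alpha> i j) (E \<alpha> i j))"
proof (intro ext)
  fix \<beta> i' j'
  have "(\<Sum>(\<alpha>,i,j)\<in>Sk n d K. mpscale (p \<alpha> i j) (E \<alpha> i j)) \<beta> i' j'
      = (\<Sum>s\<in>Sk n d K. if s = (\<beta>, i', j') then p \<beta> i' j' else 0)"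
    unfolding sum_app by (rule sum.cong) (auto simp: mpscale_def E_def split: if_splits)
  also have "\<dots> = p \<beta> i' j'" using Ak_zero[OF assms] by (auto simp: finite_Sk)
  finally show "p \<beta> i' j' = (\<Sum>(\<alpha>,i,j)\<in>Sk n d K. mpscale (p \<alpha> i j) (E \<alpha> i j)) \<beta> i' j'" by simp
qed

lemma mpadd_eq: "mpadd a b = a + b"
  by (simp add: mpadd_def fun_eq_iff)

interpretation mv: vector_space mpscale
  by unfold_locales (auto simp: mpscale_def fun_eq_iff algebra_simps)

lemma Ak_sub: "mv.subspace (Ak n d K)"
  unfolding mv.subspace_def
proof (intro conjI ballI allI)
  fix x y assume "x \<in> Ak n d K" "y \<in> Ak n d K"
  then show "x + y \<in> Ak n d K" unfolding Ak_def
    by (auto, (metis add.left_neutral add.right_neutral)+)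
qed (auto simp: Ak_def mpscale_def)

lemma Ak_mono: "K \<le> K' \<Longrightarrow> Ak n d K \<subseteq> Ak n d K'"
  by (force simp: Ak_def multi_idx_def)

lemma E_Ak: "\<alpha> \<in> multi_idx d K \<Longrightarrow> i < n \<Longrightarrow> j < n \<Longrightarrow> E \<alpha> i j \<in> Ak n d K"
  by (auto simp: Ak_def E_def)

lemma Ak_span: "Ak n d K \<subseteq> mv.span ((\<lambda>(\<alpha>,i,j). E \<alpha> i j) ` Sk n d K)"
proof
  fix p assume p: "p \<in> Ak n d K"
  have "(\<Sum>(\<alpha>,i,j)\<in>Sk n d K. mpscale (p \<alpha> i j) (E \<alpha> i j)) \<in> mv.span ((\<lambda>(\<alpha>,i,j). E \<alpha> i j) ` Sk n d K)"
  proof (intro mv.span_sum)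
    fix s assume s: "s \<in> Sk n d K"
    obtain \<alpha> i j where sij: "s = (\<alpha>, i, j)" by (cases s) auto
    have "E \<alpha> i j \<in> (\<lambda>(\<alpha>,i,j). E \<alpha> i j) ` Sk n d K" using s sij by force
    then have "E \<alpha> i j \<in> mv.span ((\<lambda>(\<alpha>,i,j). E \<alpha> i j) ` Sk n d K)" by (rule mv.span_base)
    then have "mpscale (p \<alpha> i j) (E \<alpha> i j) \<in> mv.span ((\<lambda>(\<alpha>,i,j). E \<alpha> i j) ` Sk n d K)" by (rule mv.span_scale)
    then show "(case s of (\<alpha>, i, j) \<Rightarrow> mpscale (p \<alpha> i j) (E \<alpha> i j)) \<in> mv.span ((\<lambda>(\<alpha>,i,j). E \<alpha> i j) ` Sk n d K)"
      using sij by simp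
  qed
  then show "p \<in> mv.span ((\<lambda>(\<alpha>,i,j). E \<alpha> i j) ` Sk n d K)" using expand[OF p] by simp
qed

lemma mpmult_add_left: "mpmult n (a + b) c = mpmult n a c + mpmult n b c"
  by (simp add: mpmult_def fun_eq_iff sum.distrib distrib_right)
lemma mpmult_add_right: "mpmult n c (a + b) = mpmult n c a + mpmult n c b"
  by (simp add: mpmult_def fun_eq_iff sum.distrib distrib_left)
lemma mpmult_scale_left: "mpmult n (mpscale s a) c = mpscale s (mpmult n a c)"
  by (simp add: mpmult_def mpscale_def fun_eq_iff sum_distrib_left mult.assoc)
lemma mpmult_scale_right: "mpmult n c (mpscale s a) = mpscale s (mpmult n c a)"
  by (simp add: mpmult_def mpscale_def fun_eq_iff sum_distrib_left algebra_simps)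
lemma mpmult_zero_left: "mpmult n 0 c = 0"
  by (simp add: mpmult_def fun_eq_iff)
lemma mpmult_zero_right: "mpmult n c 0 = 0"
  by (simp add: mpmult_def fun_eq_iff)
lemma mpmult_sum_left: "mpmult n (\<Sum>x\<in>A. f x) c = (\<Sum>x\<in>A. mpmult n (f x) c)"
proof (induction A rule: infinite_finite_induct)
  case (insert x F)
  have "sum f (insert x F) = f x + sum f F" using insert(1,2) by (rule sum.insert)
  moreover have "(\<Sum>x\<in>insert x F. mpmult n (f x) c) = mpmult n (f x) c + (\<Sum>x\<in>F. mpmult n (f x) c)"
    using insert(1,2) by (rule sum.insert)
  ultimately show ?case using insert(3) by (simp only: mpmult_add_left)
next
  case (infinite A) then show ?case by (metis sum.infinite mpmult_zero_left)
qed (simp_all only: sum.empty mpmult_zero_left)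

lemma mpstar_add: "mpstar (a + b) = mpstar a + mpstar b"
  by (simp add: mpstar_def fun_eq_iff)
lemma mpstar_scale: "mpstar (mpscale s a) = mpscale (cnj s) (mpstar a)"
  by (simp add: mpstar_def mpscale_def fun_eq_iff)
lemma mpstar_E: "mpstar (E \<beta> i j) = E \<beta> j i"
  by (auto simp: mpstar_def E_def fun_eq_iff)
lemma mpstar_xm: "mpstar (xm l a) = xm l (mpstar a)"
  by (simp add: mpstar_def xm_def fun_eq_iff)
lemma mpstar_Ak: "a \<in> Ak n d K \<Longrightarrow> mpstar a \<in> Ak n d K"
  by (auto simp: Ak_def mpstar_def)

lemma xm_add: "xm l (a + b) = xm l a + xm l b"
  by (simp add: xm_def fun_eq_iff)
lemma xm_scale: "xm l (mpscale s a) = mpscale s (xm l a)"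
  by (simp add: xm_def mpscale_def fun_eq_iff)
lemma xm_zero: "xm l 0 = 0"
  by (simp add: xm_def fun_eq_iff)
lemma xm_sum: "xm l (\<Sum>x\<in>A. f x) = (\<Sum>x\<in>A. xm l (f x))"
proof (induction A rule: infinite_finite_induct)
  case (insert x F)
  have "sum f (insert x F) = f x + sum f F" using insert(1,2) by (rule sum.insert)
  moreover have "(\<Sum>x\<in>insert x F. xm l (f x)) = xm l (f x) + (\<Sum>x\<in>F. xm l (f x))"
    using insert(1,2) by (rule sum.insert)
  ultimately show ?case using insert(3) by (simp only: xm_add)
next
  case (infinite A) then show ?case by (metis sum.infinite xm_zero)
qed (simp_all only: sum.empty xm_zero)
lemma xm_diff: "xm l (a - b) = xm l a - xm l b"
  by (simp add: xm_def fun_eq_iff)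

lemma xm_E: "xm l (E \<beta> i j) = E (\<beta>(l := Suc (\<beta> l))) i j"
proof (intro ext)
  fix \<alpha> i' j'
  have "(0 < \<alpha> l \<and> \<alpha>(l := \<alpha> l - 1) = \<beta>) \<longleftrightarrow> \<alpha> = \<beta>(l := Suc (\<beta> l))"
  proof
    assume "0 < \<alpha> l \<and> \<alpha>(l := \<alpha> l - 1) = \<beta>"
    then show "\<alpha> = \<beta>(l := Suc (\<beta> l))" by (auto simp: fun_eq_iff split: if_splits)
  next
    assume "\<alpha> = \<beta>(l := Suc (\<beta> l))"
    then show "0 < \<alpha> l \<and> \<alpha>(l := \<alpha> l - 1) = \<beta>" by (auto simp: fun_eq_iff)
  qed
  then show "xm l (E \<beta> i j) \<alpha> i' j' = E (\<beta>(l := Suc (\<beta> l))) i j \<alpha> i' j'"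
    unfolding xm_def E_def by auto
qed

lemma sum_upd_Suc:
  fixes \<beta> :: "nat \<Rightarrow> nat"
  assumes "l < d"
  shows "sum (\<beta>(l := Suc (\<beta> l))) {..<d} = Suc (sum \<beta> {..<d})"
proof -
  have "sum (\<beta>(l := Suc (\<beta> l))) {..<d} = sum (\<lambda>x. \<beta> x + (if x = l then 1 else 0)) {..<d}"
    by (rule sum.cong) auto
  also have "\<dots> = sum \<beta> {..<d} + (\<Sum>x<d. if x = l then 1 else 0)" by (simp add: sum.distrib)
  also have "(\<Sum>x<d. if x = l then 1 else 0) = (1::nat)" using assms by (subst sum.delta) auto
  finally show ?thesis by simp
qed

lemma multi_idx_upd: "l < d \<Longrightarrow> \<beta> \<in> multi_idx d K \<Longrightarrow> \<beta>(l := Suc (\<beta> l)) \<in> multi_idx d (Suc K)"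
  unfolding multi_idx_def using sum_upd_Suc[of l d \<beta>] by auto

lemma xm_Ak: assumes "l < d" "a \<in> Ak n d K" shows "xm l a \<in> Ak n d (Suc K)"
  unfolding Ak_def
proof (clarify)
  fix \<alpha> i j assume nz: "xm l a \<alpha> i j \<noteq> 0"
  then have al: "0 < \<alpha> l" and a: "a (\<alpha>(l := \<alpha> l - 1)) i j \<noteq> 0" by (auto simp: xm_def split: if_splits)
  then have m: "\<alpha>(l := \<alpha> l - 1) \<in> multi_idx d K" "i < n" "j < n" using assms by (auto simp: Ak_def)
  have "\<alpha> = (\<alpha>(l := \<alpha> l - 1))(l := Suc ((\<alpha>(l := \<alpha> l - 1)) l))" using al by (auto simp: fun_eq_iff)
  then have "\<alpha> \<in> multi_idx d (Suc K)" using multi_idx_upd[OF assms(1) m(1)] by simp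
  then show "\<alpha> \<in> multi_idx d (Suc K) \<and> i < n \<and> j < n" using m by simp
qed

lemma xm_comm: "xm l (xm k p) = xm k (xm l p)"
  by (cases "l = k") (auto simp: xm_def fun_eq_iff fun_upd_twist)

lemma le_infinite_support:
  assumes "infinite {\<beta>'. \<forall>x. \<beta>' x \<le> \<alpha> x}" "\<beta> \<in> multi_idx d K"
  shows "(\<lambda>x. \<alpha> x - \<beta> x) \<notin> multi_idx d K'"
proof
  assume a: "(\<lambda>x. \<alpha> x - \<beta> x) \<in> multi_idx d K'"
  have "\<forall>x\<ge>d. \<alpha> x = 0" using a assms(2) by (auto simp: multi_idx_def)
  then show False using finite_le[of d \<alpha>] assms(1) by simp
qed

lemma mult_E_left:
  assumes b: "b \<in> Ak n d K2" and \<beta>: "\<beta> \<in> multi_idx d K1"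
  shows "mpmult n (E \<beta> i k) b = (\<lambda>\<alpha> i' j'. if i' = i \<and> k < n \<and> (\<forall>x. \<beta> x \<le> \<alpha> x) then b (\<lambda>x. \<alpha> x - \<beta> x) k j' else 0)"
proof (intro ext)
  fix \<alpha> :: "nat \<Rightarrow> nat" and i' j' :: nat
  let ?S = "{\<beta>'. \<forall>x. \<beta>' x \<le> \<alpha> x}"
  have "mpmult n (E \<beta> i k) b \<alpha> i' j' = (\<Sum>l<n. \<Sum>\<beta>'\<in>?S. if l = k then (if \<beta>' = \<beta> \<and> i' = i then b (\<lambda>x. \<alpha> x - \<beta>' x) l j' else 0) else 0)"
    unfolding mpmult_def E_def by (intro sum.cong refl) auto
  also have "\<dots> = (\<Sum>l<n. if l = k then (\<Sum>\<beta>'\<in>?S. if \<beta>' = \<beta> \<and> i' = i then b (\<lambda>x. \<alpha> x - \<beta>' x) l j' else 0) else 0)"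
    by (intro sum.cong refl) auto
  also have "\<dots> = (if k < n then (\<Sum>\<beta>'\<in>?S. if \<beta>' = \<beta> \<and> i' = i then b (\<lambda>x. \<alpha> x - \<beta>' x) k j' else 0) else 0)"
    by (simp add: sum.delta)
  also have "\<dots> = (if i' = i \<and> k < n \<and> (\<forall>x. \<beta> x \<le> \<alpha> x) then b (\<lambda>x. \<alpha> x - \<beta> x) k j' else 0)"
  proof (cases "finite ?S")
    case True
    have "(\<Sum>\<beta>'\<in>?S. if \<beta>' = \<beta> \<and> i' = i then b (\<lambda>x. \<alpha> x - \<beta>' x) k j' else 0)
        = (\<Sum>\<beta>'\<in>?S. if \<beta>' = \<beta> then (if i' = i then b (\<lambda>x. \<alpha> x - \<beta>' x) k j' else 0) else 0)"
      by (intro sum.cong refl) auto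
    also have "\<dots> = (if \<beta> \<in> ?S then (if i' = i then b (\<lambda>x. \<alpha> x - \<beta> x) k j' else 0) else 0)"
      using True by (simp add: sum.delta)
    finally show ?thesis by auto
  next
    case False
    have "b (\<lambda>x. \<alpha> x - \<beta> x) k j' = 0"
      using le_infinite_support[OF False \<beta>, of K2] b by (auto simp: Ak_def)
    then show ?thesis using False by auto
  qed
  finally show "mpmult n (E \<beta> i k) b \<alpha> i' j' = (if i' = i \<and> k < n \<and> (\<forall>x. \<beta> x \<le> \<alpha> x) then b (\<lambda>x. \<alpha> x - \<beta> x) k j' else 0)" .
qed

lemma mult_E_E:
  assumes "\<beta> \<in> multi_idx d K1" "\<gamma> \<in> multi_idx d K2" "k' < n" "j < n"
  shows "mpmult n (E \<beta> i k) (E \<gamma> k' j) = (if k = k' then E (\<lambda>x. \<beta> x + \<gamma> x) i j else 0)"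
proof -
  have b: "E \<gamma> k' j \<in> Ak n d K2" using assms by (rule_tac E_Ak) auto
  have eq: "((\<forall>x. \<beta> x \<le> \<alpha> x) \<and> (\<lambda>x. \<alpha> x - \<beta> x) = \<gamma>) \<longleftrightarrow> \<alpha> = (\<lambda>x. \<beta> x + \<gamma> x)" for \<alpha>
    by (auto simp: fun_eq_iff) (metis le_add_diff_inverse)
  show ?thesis unfolding mult_E_left[OF b assms(1)]
    using assms(3) eq by (auto simp: fun_eq_iff E_def; metis le_add_diff_inverse add_diff_cancel_left')
qed


lemma mult_xm_E_left:
  assumes \<beta>: "\<beta> \<in> multi_idx d K1" and b: "b \<in> Ak n d K2" and l: "l < d"
  shows "mpmult n (xm l (E \<beta> i k)) b = xm l (mpmult n (E \<beta> i k) b)"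
proof -
  have \<beta>': "\<beta>(l := Suc (\<beta> l)) \<in> multi_idx d (Suc K1)" using multi_idx_upd[OF l \<beta>] .
  show ?thesis
    unfolding xm_E mult_E_left[OF b \<beta>'] mult_E_left[OF b \<beta>]
  proof (intro ext)
    fix \<alpha> :: "nat \<Rightarrow> nat" and i' j' :: nat
    let ?a = "\<alpha>(l := \<alpha> l - 1)"
    have iff: "(\<forall>x. (\<beta>(l := Suc (\<beta> l))) x \<le> \<alpha> x) = (0 < \<alpha> l \<and> (\<forall>x. \<beta> x \<le> ?a x))"
    proof
      assume H: "\<forall>x. (\<beta>(l := Suc (\<beta> l))) x \<le> \<alpha> x"
      have "Suc (\<beta> l) \<le> \<alpha> l" using H[rule_format, of l] by simp
      moreover have "\<beta> x \<le> ?a x" for x using H[rule_format, of x] by (cases "x = l") auto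
      ultimately show "0 < \<alpha> l \<and> (\<forall>x. \<beta> x \<le> ?a x)" by auto
    next
      assume H: "0 < \<alpha> l \<and> (\<forall>x. \<beta> x \<le> ?a x)"
      show "\<forall>x. (\<beta>(l := Suc (\<beta> l))) x \<le> \<alpha> x"
      proof
        fix x show "(\<beta>(l := Suc (\<beta> l))) x \<le> \<alpha> x"
        proof (cases "x = l")
          case True
          have "0 < \<alpha> l" "\<beta> l \<le> \<alpha> l - 1" using H[THEN conjunct1] H[THEN conjunct2, rule_format, of l] by auto
          then show ?thesis using True by simp
        next
          case False then show ?thesis using H[THEN conjunct2, rule_format, of x] by simp
        qed
      qed
    qed
    have eqf: "(\<lambda>x. \<alpha> x - (\<beta>(l := Suc (\<beta> l))) x) = (\<lambda>x. ?a x - \<beta> x)" by (auto simp: fun_eq_iff)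
    show "(if i' = i \<and> k < n \<and> (\<forall>x. (\<beta>(l := Suc (\<beta> l))) x \<le> \<alpha> x) then b (\<lambda>x. \<alpha> x - (\<beta>(l := Suc (\<beta> l))) x) k j' else 0)
        = xm l (\<lambda>\<alpha> i' j'. if i' = i \<and> k < n \<and> (\<forall>x. \<beta> x \<le> \<alpha> x) then b (\<lambda>x. \<alpha> x - \<beta> x) k j' else 0) \<alpha> i' j'"
      unfolding xm_def iff eqf by auto
  qed
qed

lemma mult_xm_E_right:
  assumes \<beta>: "\<beta> \<in> multi_idx d K1" and b: "b \<in> Ak n d K2" and l: "l < d"
  shows "mpmult n (E \<beta> i k) (xm l b) = xm l (mpmult n (E \<beta> i k) b)"
proof -
  have b': "xm l b \<in> Ak n d (Suc K2)" using xm_Ak[OF l b] .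
  show ?thesis
    unfolding mult_E_left[OF b' \<beta>] mult_E_left[OF b \<beta>]
  proof (intro ext)
    fix \<alpha> :: "nat \<Rightarrow> nat" and i' j' :: nat
    let ?a = "\<alpha>(l := \<alpha> l - 1)"
    have iff: "((\<forall>x. \<beta> x \<le> \<alpha> x) \<and> 0 < \<alpha> l - \<beta> l) = (0 < \<alpha> l \<and> (\<forall>x. \<beta> x \<le> ?a x))"
    proof
      assume H: "(\<forall>x. \<beta> x \<le> \<alpha> x) \<and> 0 < \<alpha> l - \<beta> l"
      have "\<beta> x \<le> ?a x" for x using H[THEN conjunct1, rule_format, of x] H by (cases "x = l") auto
      then show "0 < \<alpha> l \<and> (\<forall>x. \<beta> x \<le> ?a x)" using H by auto
    next
      assume H: "0 < \<alpha> l \<and> (\<forall>x. \<beta> x \<le> ?a x)"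
      have "\<beta> x \<le> \<alpha> x" for x using H[THEN conjunct2, rule_format, of x] H by (cases "x = l") auto
      moreover have "\<beta> l < \<alpha> l"
      proof -
        have "0 < \<alpha> l" "\<beta> l \<le> \<alpha> l - 1" using H[THEN conjunct1] H[THEN conjunct2, rule_format, of l] by auto
        then show ?thesis by simp
      qed
      ultimately show "(\<forall>x. \<beta> x \<le> \<alpha> x) \<and> 0 < \<alpha> l - \<beta> l" by auto
    qed
    have eqf: "(\<lambda>x. \<alpha> x - \<beta> x)(l := (\<alpha> l - \<beta> l) - 1) = (\<lambda>x. ?a x - \<beta> x)" by (auto simp: fun_eq_iff)
    show "(if i' = i \<and> k < n \<and> (\<forall>x. \<beta> x \<le> \<alpha> x) then xm l b (\<lambda>x. \<alpha> x - \<beta> x) k j' else 0)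
        = xm l (\<lambda>\<alpha> i' j'. if i' = i \<and> k < n \<and> (\<forall>x. \<beta> x \<le> \<alpha> x) then b (\<lambda>x. \<alpha> x - \<beta> x) k j' else 0) \<alpha> i' j'"
    proof -
      have "(if i' = i \<and> k < n \<and> (\<forall>x. \<beta> x \<le> \<alpha> x) then xm l b (\<lambda>x. \<alpha> x - \<beta> x) k j' else 0)
         = (if i' = i \<and> k < n \<and> ((\<forall>x. \<beta> x \<le> \<alpha> x) \<and> 0 < \<alpha> l - \<beta> l) then b ((\<lambda>x. \<alpha> x - \<beta> x)(l := (\<alpha> l - \<beta> l) - 1)) k j' else 0)"
        by (auto simp: xm_def)
      then show ?thesis unfolding iff eqf by (auto simp: xm_def)
    qed
  qed
qed

lemma expand_Ak_mem: "(\<alpha>, i, j) \<in> Sk n d K \<Longrightarrow> \<alpha> \<in> multi_idx d K"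
  by (simp add: Sk_def)

lemma mult_xm_left:
  assumes a: "a \<in> Ak n d K1" and b: "b \<in> Ak n d K2" and l: "l < d"
  shows "mpmult n (xm l a) b = xm l (mpmult n a b)"
proof -
  have ea: "a = (\<Sum>(\<alpha>,i,j)\<in>Sk n d K1. mpscale (a \<alpha> i j) (E \<alpha> i j))" by (rule expand[OF a])
  have "mpmult n (xm l a) b = mpmult n (xm l (\<Sum>(\<alpha>,i,j)\<in>Sk n d K1. mpscale (a \<alpha> i j) (E \<alpha> i j))) b"
    by (rule arg_cong[where f = "\<lambda>z. mpmult n (xm l z) b"]) (rule ea)
  also have "\<dots> = (\<Sum>(\<alpha>,i,j)\<in>Sk n d K1. mpscale (a \<alpha> i j) (xm l (mpmult n (E \<alpha> i j) b)))"
    unfolding xm_sum mpmult_sum_left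
    by (intro sum.cong refl) (auto simp: xm_scale mpmult_scale_left mult_xm_E_left[OF _ b l] Sk_def)
  also have "\<dots> = xm l (\<Sum>(\<alpha>,i,j)\<in>Sk n d K1. mpmult n (mpscale (a \<alpha> i j) (E \<alpha> i j)) b)"
    unfolding xm_sum by (intro sum.cong refl) (auto simp: xm_scale mpmult_scale_left)
  also have "\<dots> = xm l (mpmult n (\<Sum>(\<alpha>,i,j)\<in>Sk n d K1. mpscale (a \<alpha> i j) (E \<alpha> i j)) b)"
    unfolding mpmult_sum_left by (intro arg_cong[where f = "xm l"] sum.cong refl) auto
  also have "\<dots> = xm l (mpmult n a b)" using ea by simp
  finally show ?thesis .
qed

lemma mult_xm_right:
  assumes a: "a \<in> Ak n d K1" and b: "b \<in> Ak n d K2" and l: "l < d"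
  shows "mpmult n a (xm l b) = xm l (mpmult n a b)"
proof -
  have ea: "a = (\<Sum>(\<alpha>,i,j)\<in>Sk n d K1. mpscale (a \<alpha> i j) (E \<alpha> i j))" by (rule expand[OF a])
  have "mpmult n a (xm l b) = mpmult n (\<Sum>(\<alpha>,i,j)\<in>Sk n d K1. mpscale (a \<alpha> i j) (E \<alpha> i j)) (xm l b)"
    by (rule arg_cong[where f = "\<lambda>z. mpmult n z (xm l b)"]) (rule ea)
  also have "\<dots> = (\<Sum>(\<alpha>,i,j)\<in>Sk n d K1. mpscale (a \<alpha> i j) (xm l (mpmult n (E \<alpha> i j) b)))"
    unfolding mpmult_sum_left
    by (intro sum.cong refl) (auto simp: mpmult_scale_left mult_xm_E_right[OF _ b l] Sk_def)
  also have "\<dots> = xm l (\<Sum>(\<alpha>,i,j)\<in>Sk n d K1. mpmult n (mpscale (a \<alpha> i j) (E \<alpha> i j)) b)"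
    unfolding xm_sum by (intro sum.cong refl) (auto simp: xm_scale mpmult_scale_left)
  also have "\<dots> = xm l (mpmult n (\<Sum>(\<alpha>,i,j)\<in>Sk n d K1. mpscale (a \<alpha> i j) (E \<alpha> i j)) b)"
    unfolding mpmult_sum_left by (intro arg_cong[where f = "xm l"] sum.cong refl) auto
  also have "\<dots> = xm l (mpmult n a b)" using ea by simp
  finally show ?thesis .
qed

lemma mult_Ak:
  assumes a: "a \<in> Ak n d K1" and b: "b \<in> Ak n d K2"
  shows "mpmult n a b \<in> Ak n d (K1 + K2)"
  unfolding Ak_def
proof (clarify)
  fix \<alpha> i j assume nz: "mpmult n a b \<alpha> i j \<noteq> 0"
  then have "(\<Sum>l<n. \<Sum>\<beta>\<in>{\<beta>. \<forall>x. \<beta> x \<le> \<alpha> x}. a \<beta> i l * b (\<lambda>x. \<alpha> x - \<beta> x) l j) \<noteq> 0"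
    by (simp add: mpmult_def)
  then obtain l where l: "l \<in> {..<n}" "(\<Sum>\<beta>\<in>{\<beta>. \<forall>x. \<beta> x \<le> \<alpha> x}. a \<beta> i l * b (\<lambda>x. \<alpha> x - \<beta> x) l j) \<noteq> 0"
    by (rule sum.not_neutral_contains_not_neutral)
  from l(2) obtain \<beta> where \<beta>0: "\<beta> \<in> {\<beta>. \<forall>x. \<beta> x \<le> \<alpha> x}" "a \<beta> i l * b (\<lambda>x. \<alpha> x - \<beta> x) l j \<noteq> 0"
    by (rule sum.not_neutral_contains_not_neutral)
  then have \<beta>: "\<forall>x. \<beta> x \<le> \<alpha> x" "a \<beta> i l * b (\<lambda>x. \<alpha> x - \<beta> x) l j \<noteq> 0" by auto
  then have ab: "a \<beta> i l \<noteq> 0" "b (\<lambda>x. \<alpha> x - \<beta> x) l j \<noteq> 0" by auto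
  then have m: "\<beta> \<in> multi_idx d K1" "i < n" "(\<lambda>x. \<alpha> x - \<beta> x) \<in> multi_idx d K2" "j < n"
    using a b by (auto simp: Ak_def)
  have al: "\<alpha> x = \<beta> x + (\<alpha> x - \<beta> x)" for x using \<beta>(1) by (metis le_add_diff_inverse)
  have "\<forall>x\<ge>d. \<alpha> x = 0"
  proof (intro allI impI)
    fix x assume x: "d \<le> x"
    have "\<beta> x = 0" "\<alpha> x - \<beta> x = 0" using m(1,3) x by (auto simp: multi_idx_def)
    then show "\<alpha> x = 0" by simp
  qed
  moreover have "sum \<alpha> {..<d} = sum \<beta> {..<d} + sum (\<lambda>x. \<alpha> x - \<beta> x) {..<d}"
  proof -
    have "sum \<alpha> {..<d} = sum (\<lambda>x. \<beta> x + (\<alpha> x - \<beta> x)) {..<d}"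
      by (rule sum.cong) (rule refl, rule al)
    then show ?thesis by (simp only: sum.distrib)
  qed
  ultimately have "\<alpha> \<in> multi_idx d (K1 + K2)" using m(1,3) by (auto simp: multi_idx_def)
  then show "\<alpha> \<in> multi_idx d (K1 + K2) \<and> i < n \<and> j < n" using m by simp
qed




lemma prod_upd:
  fixes f :: "nat \<Rightarrow> complex" and g :: "nat \<Rightarrow> nat"
  assumes l: "l < d"
  shows "(\<Prod>x<d. f x ^ (g(l := Suc (g l))) x) = f l * (\<Prod>x<d. f x ^ g x)"
proof -
  have "(\<Prod>x<d. f x ^ (g(l := Suc (g l))) x) = (\<Prod>x<d. f x ^ g x * (if x = l then f x else 1))"
    by (rule prod.cong) auto
  also have "\<dots> = (\<Prod>x<d. f x ^ g x) * (\<Prod>x<d. if x = l then f x else 1)"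
    by (rule prod.distrib)
  also have "(\<Prod>x<d. if x = l then f x else 1) = f l" using l by (subst prod.delta) auto
  finally show ?thesis by (simp add: mult.commute)
qed

lemma prod_add_pow:
  fixes f :: "nat \<Rightarrow> complex"
  shows "(\<Prod>x<d. f x ^ g x) * (\<Prod>x<d. f x ^ h x) = (\<Prod>x<d. f x ^ (g x + h x))"
  by (simp add: prod.distrib[symmetric] power_add)

lemma split_idx:
  fixes \<alpha> :: "nat \<Rightarrow> nat"
  assumes "\<forall>x\<ge>D. \<alpha> x = 0" "sum \<alpha> {..<D} \<le> a + b"
  shows "\<exists>\<beta> \<gamma>. (\<forall>x\<ge>D. \<beta> x = 0) \<and> (\<forall>x\<ge>D. \<gamma> x = 0) \<and> sum \<beta> {..<D} \<le> a \<and> sum \<gamma> {..<D} \<le> b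
     \<and> (\<forall>x. \<alpha> x = \<beta> x + \<gamma> x)"
  using assms
proof (induction D arbitrary: \<alpha> a b)
  case 0
  then show ?case by (intro exI[of _ "\<lambda>_. 0"]) auto
next
  case (Suc D)
  define c where "c = min (\<alpha> D) a"
  define \<alpha>' where "\<alpha>' = \<alpha>(D := 0)"
  have z: "\<forall>x\<ge>D. \<alpha>' x = 0" using Suc.prems(1) by (auto simp: \<alpha>'_def)
  have s: "sum \<alpha>' {..<D} = sum \<alpha> {..<D}" by (rule sum.cong) (auto simp: \<alpha>'_def)
  have tot: "sum \<alpha> {..<D} + \<alpha> D \<le> a + b" using Suc.prems(2) by simp
  have le: "sum \<alpha>' {..<D} \<le> (a - c) + (b - (\<alpha> D - c))"
    using tot unfolding s c_def by (cases "\<alpha> D \<le> a") auto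
  obtain \<beta>' \<gamma>' where bg: "\<forall>x\<ge>D. \<beta>' x = 0" "\<forall>x\<ge>D. \<gamma>' x = 0" "sum \<beta>' {..<D} \<le> a - c"
    "sum \<gamma>' {..<D} \<le> b - (\<alpha> D - c)" "\<forall>x. \<alpha>' x = \<beta>' x + \<gamma>' x"
    using Suc.IH[OF z le] by blast
  define \<beta> where "\<beta> = \<beta>'(D := c)"
  define \<gamma> where "\<gamma> = \<gamma>'(D := \<alpha> D - c)"
  have ca: "c \<le> a" "c \<le> \<alpha> D" "\<alpha> D - c \<le> b" using tot unfolding c_def by auto
  have sb: "sum \<beta> {..<Suc D} = sum \<beta>' {..<D} + c"
  proof -
    have "sum \<beta> {..<D} = sum \<beta>' {..<D}" by (rule sum.cong) (auto simp: \<beta>_def)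
    then show ?thesis by (simp add: \<beta>_def)
  qed
  have sg: "sum \<gamma> {..<Suc D} = sum \<gamma>' {..<D} + (\<alpha> D - c)"
  proof -
    have "sum \<gamma> {..<D} = sum \<gamma>' {..<D}" by (rule sum.cong) (auto simp: \<gamma>_def)
    then show ?thesis by (simp add: \<gamma>_def)
  qed
  have "\<forall>x. \<alpha> x = \<beta> x + \<gamma> x"
  proof
    fix x show "\<alpha> x = \<beta> x + \<gamma> x"
    proof (cases "x = D")
      case True then show ?thesis using ca by (simp add: \<beta>_def \<gamma>_def)
    next
      case False then show ?thesis using bg(5)[rule_format, of x] by (simp add: \<beta>_def \<gamma>_def \<alpha>'_def)
    qed
  qed
  moreover have "\<forall>x\<ge>Suc D. \<beta> x = 0" "\<forall>x\<ge>Suc D. \<gamma> x = 0" using bg(1,2) by (auto simp: \<beta>_def \<gamma>_def)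
  moreover have "sum \<beta> {..<Suc D} \<le> a" "sum \<gamma> {..<Suc D} \<le> b" using sb sg bg(3,4) ca by auto
  ultimately show ?case by blast
qed

lemma split_multi:
  assumes "\<alpha> \<in> multi_idx d (Suc (Suc (2*m)))"
  shows "\<exists>\<beta> \<gamma>. \<beta> \<in> multi_idx d (Suc m) \<and> \<gamma> \<in> multi_idx d (Suc m) \<and> \<alpha> = (\<lambda>x. \<beta> x + \<gamma> x)"
proof -
  have a1: "\<forall>x\<ge>d. \<alpha> x = 0" using assms by (simp add: multi_idx_def)
  have a2: "sum \<alpha> {..<d} \<le> Suc m + Suc m" using assms by (simp add: multi_idx_def)
  obtain \<beta> \<gamma> where bg: "\<forall>x\<ge>d. \<beta> x = 0" "\<forall>x\<ge>d. \<gamma> x = 0" "sum \<beta> {..<d} \<le> Suc m" "sum \<gamma> {..<d} \<le> Suc m"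
     "\<forall>x. \<alpha> x = \<beta> x + \<gamma> x" using split_idx[OF a1 a2] by blast
  have "\<beta> \<in> multi_idx d (Suc m)" "\<gamma> \<in> multi_idx d (Suc m)" using bg(1-4) by (simp_all add: multi_idx_def)
  moreover have "\<alpha> = (\<lambda>x. \<beta> x + \<gamma> x)" using bg(5) by (simp add: fun_eq_iff)
  ultimately show ?thesis by blast
qed

context
  fixes n d m :: nat and L :: "mpmat \<Rightarrow> complex"
  assumes lin: "lin_on (Ak n d (Suc (Suc (2*m)))) L"
    and pos: "positive_on n (Ak n d (Suc m)) L"
    and flat: "flat_ext n (Ak n d m) (Ak n d (Suc m)) L"
begin

abbreviation "BB \<equiv> Ak n d m"
abbreviation "CC \<equiv> Ak n d (Suc m)"
abbreviation "AA \<equiv> Ak n d (Suc (Suc (2*m)))"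

definition hh :: "mpmat \<Rightarrow> mpmat \<Rightarrow> complex" where
  "hh a b = L (mpmult n (mpstar b) a)"

lemma BC: "BB \<subseteq> CC" by (rule Ak_mono) simp
lemma BCm: "a \<in> BB \<Longrightarrow> a \<in> CC" using BC by blast

lemma prodA: "a \<in> CC \<Longrightarrow> b \<in> CC \<Longrightarrow> mpmult n (mpstar b) a \<in> AA"
  using mult_Ak[OF mpstar_Ak[of b n d "Suc m"] , of a "Suc m"] by (simp add: mult_2)

lemma Ladd: "a \<in> AA \<Longrightarrow> b \<in> AA \<Longrightarrow> L (a + b) = L a + L b"
  using lin by (simp add: lin_on_def mpadd_eq)
lemma Lscale: "a \<in> AA \<Longrightarrow> L (mpscale c a) = c * L a"
  using lin by (simp add: lin_on_def)
lemma AA0: "0 \<in> AA" using Ak_sub mv.subspace_0 by blast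
lemma L0: "L 0 = 0"
proof -
  have "mpscale 0 0 = (0::mpmat)" by (simp add: mpscale_def fun_eq_iff)
  then show ?thesis using Lscale[OF AA0, of 0] by simp
qed
lemma Lsum: "(\<And>i. i \<in> I \<Longrightarrow> f i \<in> AA) \<Longrightarrow> L (sum f I) = (\<Sum>i\<in>I. L (f i))"
proof (induction I rule: infinite_finite_induct)
  case (infinite A) then show ?case by (metis sum.infinite L0)
next
  case empty then show ?case by (metis sum.empty L0)
next
  case (insert x F)
  have "sum f F \<in> AA" using insert by (intro mv.subspace_sum[OF Ak_sub]) auto
  then have "L (f x + sum f F) = L (f x) + L (sum f F)" using insert by (intro Ladd) auto
  moreover have "sum f (insert x F) = f x + sum f F" using insert(1,2) by (rule sum.insert)
  moreover have "(\<Sum>i\<in>insert x F. L (f i)) = L (f x) + (\<Sum>i\<in>F. L (f i))" using insert(1,2) by (rule sum.insert)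
  moreover have "L (sum f F) = (\<Sum>i\<in>F. L (f i))" using insert by auto
  ultimately show ?case by (simp only:)
qed

lemma Csub: "mv.subspace CC" by (rule Ak_sub)
lemma Cadd: "a \<in> CC \<Longrightarrow> b \<in> CC \<Longrightarrow> a + b \<in> CC" using Csub mv.subspace_add by blast
lemma Cscale: "a \<in> CC \<Longrightarrow> mpscale s a \<in> CC" using Csub mv.subspace_scale by blast
lemma Cdiff: "a \<in> CC \<Longrightarrow> b \<in> CC \<Longrightarrow> a - b \<in> CC" using Csub mv.subspace_diff by blast

lemma hadd: assumes a: "a \<in> CC" and b: "b \<in> CC" and c: "c \<in> CC" shows "hh (a + b) c = hh a c + hh b c"
  unfolding hh_def mpmult_add_right by (rule Ladd[OF prodA[OF a c] prodA[OF b c]])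
lemma hadd2: assumes a: "a \<in> CC" and b: "b \<in> CC" and c: "c \<in> CC" shows "hh c (a + b) = hh c a + hh c b"
  unfolding hh_def mpstar_add mpmult_add_left by (rule Ladd[OF prodA[OF c a] prodA[OF c b]])
lemma hscale: assumes a: "a \<in> CC" and c: "c \<in> CC" shows "hh (mpscale s a) c = s * hh a c"
  unfolding hh_def mpmult_scale_right by (rule Lscale[OF prodA[OF a c]])
lemma hscale2: assumes a: "a \<in> CC" and c: "c \<in> CC" shows "hh c (mpscale s a) = cnj s * hh c a"
  unfolding hh_def mpstar_scale mpmult_scale_left by (rule Lscale[OF prodA[OF c a]])
lemma hreal: "a \<in> CC \<Longrightarrow> Im (hh a a) = 0"
  using pos by (simp add: positive_on_def hh_def)
lemma hpos: "a \<in> CC \<Longrightarrow> 0 \<le> Re (hh a a)"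
  using pos by (simp add: positive_on_def hh_def)

lemma hsym: assumes a: "a \<in> CC" and b: "b \<in> CC" shows "hh a b = cnj (hh b a)"
proof -
  define x where "x = hh a b"
  define y where "y = hh b a"
  have ib: "mpscale \<i> b \<in> CC" using Cscale[OF b] .
  have "Im (hh (a + b) (a + b)) = 0" using hreal[OF Cadd[OF a b]] .
  moreover have "hh (a + b) (a + b) = hh a a + x + y + hh b b"
    using hadd[OF a b Cadd[OF a b]] hadd2[OF a b a] hadd2[OF a b b] x_def y_def by simp
  ultimately have 1: "Im x + Im y = 0" using hreal[OF a] hreal[OF b] by simp
  have e2: "hh (a + mpscale \<i> b) (a + mpscale \<i> b) = hh a (a + mpscale \<i> b) + hh (mpscale \<i> b) (a + mpscale \<i> b)"
    by (rule hadd[OF a ib Cadd[OF a ib]])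
  have e3: "hh a (a + mpscale \<i> b) = hh a a + cnj \<i> * x"
    using hadd2[OF a ib a] hscale2[OF b a] x_def by simp
  have e4: "hh (mpscale \<i> b) (a + mpscale \<i> b) = \<i> * (y + cnj \<i> * hh b b)"
    using hscale[OF b Cadd[OF a ib]] hadd2[OF a ib b] hscale2[OF b b] y_def by simp
  have "Im (hh (a + mpscale \<i> b) (a + mpscale \<i> b)) = 0" using hreal[OF Cadd[OF a ib]] .
  then have "Im (hh a a + cnj \<i> * x + \<i> * (y + cnj \<i> * hh b b)) = 0" using e2 e3 e4 by simp
  then have 2: "Re y - Re x = 0" using hreal[OF a] hreal[OF b] by (simp add: algebra_simps)
  show ?thesis using 1 2 by (simp add: complex_eq_iff x_def[symmetric] y_def[symmetric])
qed

definition KK where "KK = kernelL n CC L"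

lemma KK_iff: "k \<in> KK \<longleftrightarrow> k \<in> CC \<and> (\<forall>b\<in>CC. hh k b = 0)"
  by (simp add: KK_def kernelL_def hh_def)

lemma hK1: "k \<in> KK \<Longrightarrow> x \<in> CC \<Longrightarrow> hh k x = 0" by (simp add: KK_iff)
lemma hK2: "k \<in> KK \<Longrightarrow> x \<in> CC \<Longrightarrow> hh x k = 0"
  using hsym[of x k] by (simp add: KK_iff)

lemma KK_sub: "mv.subspace KK"
  unfolding mv.subspace_def
proof (intro conjI ballI allI)
  show "0 \<in> KK" unfolding KK_iff using Csub mv.subspace_0
    by (auto simp: hh_def mpmult_zero_right L0)
next
  fix x y assume "x \<in> KK" "y \<in> KK"
  then show "x + y \<in> KK" unfolding KK_iff using Cadd hadd by auto
next
  fix c x assume "x \<in> KK"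
  then show "mpscale c x \<in> KK" by (auto simp: KK_iff Cscale hscale)
qed

lemma decomp: "c \<in> CC \<Longrightarrow> \<exists>b\<in>BB. c - b \<in> KK"
  using flat unfolding flat_ext_def mpadd_eq KK_def by (metis add_diff_cancel_left')

definition rho where "rho c = (SOME b. b \<in> BB \<and> c - b \<in> KK)"

lemma rho: assumes c: "c \<in> CC" shows "rho c \<in> BB \<and> c - rho c \<in> KK"
proof -
  have "\<exists>b. b \<in> BB \<and> c - b \<in> KK" using decomp[OF c] by blast
  then show ?thesis unfolding rho_def by (rule someI_ex)
qed

definition TT :: "nat \<Rightarrow> mpmat \<Rightarrow> mpmat" where
  "TT l p = (\<Sum>(\<alpha>,i,j)\<in>Sk n d m. mpscale (p \<alpha> i j) (rho (xm l (E \<alpha> i j))))"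

lemma TT_add: "TT l (a + b) = TT l a + TT l b"
  unfolding TT_def by (simp add: sum.distrib[symmetric] case_prod_beta mv.scale_left_distrib)
lemma TT_scale: "TT l (mpscale s a) = mpscale s (TT l a)"
  unfolding TT_def by (simp add: mv.scale_sum_right case_prod_beta) (simp add: mpscale_def)

lemma xmE_C: "l < d \<Longrightarrow> (\<alpha>, i, j) \<in> Sk n d m \<Longrightarrow> xm l (E \<alpha> i j) \<in> CC"
  using xm_Ak[OF _ E_Ak] by (simp add: Sk_def)

lemma TT_B: "l < d \<Longrightarrow> TT l p \<in> BB"
  unfolding TT_def
  by (intro mv.subspace_sum[OF Ak_sub]) (auto intro!: mv.subspace_scale[OF Ak_sub] rho[THEN conjunct1] xmE_C)

lemma TT_K: assumes l: "l < d" and b: "b \<in> BB" shows "TT l b - xm l b \<in> KK"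
proof -
  have "xm l b = (\<Sum>(\<alpha>,i,j)\<in>Sk n d m. mpscale (b \<alpha> i j) (xm l (E \<alpha> i j)))"
    by (subst expand[OF b]) (simp add: xm_sum case_prod_beta xm_scale)
  then have "TT l b - xm l b = (\<Sum>(\<alpha>,i,j)\<in>Sk n d m. mpscale (b \<alpha> i j) (rho (xm l (E \<alpha> i j)) - xm l (E \<alpha> i j)))"
    unfolding TT_def by (simp add: sum_subtractf[symmetric] case_prod_beta mv.scale_right_diff_distrib)
  also have "\<dots> \<in> KK"
  proof (intro mv.subspace_sum[OF KK_sub])
    fix s assume s: "s \<in> Sk n d m"
    obtain \<alpha> i j where sij: "s = (\<alpha>, i, j)" by (cases s) auto
    have "xm l (E \<alpha> i j) - rho (xm l (E \<alpha> i j)) \<in> KK" using rho[OF xmE_C[OF l s[unfolded sij]]] by simp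
    then have "rho (xm l (E \<alpha> i j)) - xm l (E \<alpha> i j) \<in> KK"
      using mv.subspace_neg[OF KK_sub] by fastforce
    then show "(case s of (\<alpha>, i, j) \<Rightarrow> mpscale (b \<alpha> i j) (rho (xm l (E \<alpha> i j)) - xm l (E \<alpha> i j))) \<in> KK"
      using sij mv.subspace_scale[OF KK_sub] by simp
  qed
  finally show ?thesis .
qed

lemma xm_adj: assumes l: "l < d" and a: "a \<in> BB" and b: "b \<in> BB"
  shows "hh (xm l a) b = hh a (xm l b)"
proof -
  have "hh (xm l a) b = L (xm l (mpmult n (mpstar b) a))"
    unfolding hh_def using mult_xm_right[OF mpstar_Ak[OF b] a l] by simp
  moreover have "hh a (xm l b) = L (xm l (mpmult n (mpstar b) a))"
    unfolding hh_def mpstar_xm using mult_xm_left[OF mpstar_Ak[OF b] a l] by simp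
  ultimately show ?thesis by simp
qed

lemma hK_sub1: assumes x: "x \<in> CC" and y: "y \<in> CC" and k: "y - x \<in> KK" and c: "c \<in> CC"
  shows "hh y c = hh x c"
proof -
  have "y = x + (y - x)" by simp
  then have "hh y c = hh x c + hh (y - x) c" using hadd[OF x Cdiff[OF y x] c] by metis
  then show ?thesis using hK1[OF k c] by simp
qed

lemma hK_sub2: assumes x: "x \<in> CC" and y: "y \<in> CC" and k: "y - x \<in> KK" and c: "c \<in> CC"
  shows "hh c y = hh c x"
proof -
  have "y = x + (y - x)" by simp
  then have "hh c y = hh c x + hh c (y - x)" using hadd2[OF x Cdiff[OF y x] c] by metis
  then show ?thesis using hK2[OF k c] by simp
qed

lemma xmB_C: "l < d \<Longrightarrow> a \<in> BB \<Longrightarrow> xm l a \<in> CC"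
  using xm_Ak by blast

lemma Tsa: assumes l: "l < d" and a: "a \<in> BB" and b: "b \<in> BB"
  shows "hh (TT l a) b = hh a (TT l b)"
proof -
  have "hh (TT l a) b = hh (xm l a) b"
    using hK_sub1[OF xmB_C[OF l a] BCm[OF TT_B[OF l]] TT_K[OF l a] BCm[OF b]] .
  also have "\<dots> = hh a (xm l b)" by (rule xm_adj[OF l a b])
  also have "\<dots> = hh a (TT l b)"
    using hK_sub2[OF xmB_C[OF l b] BCm[OF TT_B[OF l]] TT_K[OF l b] BCm[OF a]] by simp
  finally show ?thesis .
qed

lemma TTT: assumes l: "l < d" and k: "k < d" and a: "a \<in> BB" and b: "b \<in> BB"
  shows "hh (TT l (TT k a)) b = L (xm l (xm k (mpmult n (mpstar b) a)))"
proof -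
  have Tka: "TT k a \<in> BB" by (rule TT_B[OF k])
  have "hh (TT l (TT k a)) b = hh (xm l (TT k a)) b"
    using hK_sub1[OF xmB_C[OF l Tka] BCm[OF TT_B[OF l]] TT_K[OF l Tka] BCm[OF b]] .
  also have "\<dots> = hh (TT k a) (xm l b)" by (rule xm_adj[OF l Tka b])
  also have "\<dots> = hh (xm k a) (xm l b)"
    using hK_sub1[OF xmB_C[OF k a] BCm[OF Tka] TT_K[OF k a] xmB_C[OF l b]] .
  also have "\<dots> = L (mpmult n (xm l (mpstar b)) (xm k a))" by (simp add: hh_def mpstar_xm)
  also have "\<dots> = L (xm l (mpmult n (mpstar b) (xm k a)))"
    using mult_xm_left[OF mpstar_Ak[OF b] xm_Ak[OF k a] l] by simp
  also have "\<dots> = L (xm l (xm k (mpmult n (mpstar b) a)))"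
    using mult_xm_right[OF mpstar_Ak[OF b] a k] by simp
  finally show ?thesis .
qed

lemma Bsub: "mv.subspace BB" by (rule Ak_sub)

lemma core_inst: "core mpscale BB ((\<lambda>(\<alpha>,i,j). E \<alpha> i j) ` Sk n d m) hh TT d"
proof (unfold_locales)
  show "mv.subspace BB" by (rule Bsub)
  show "finite ((\<lambda>(\<alpha>,i,j). E \<alpha> i j) ` Sk n d m)" by (simp add: finite_Sk)
  show "BB \<subseteq> mv.span ((\<lambda>(\<alpha>,i,j). E \<alpha> i j) ` Sk n d m)" by (rule Ak_span)
  show "\<And>a b c. a \<in> BB \<Longrightarrow> b \<in> BB \<Longrightarrow> c \<in> BB \<Longrightarrow> hh (a + b) c = hh a c + hh b c"
    using hadd BCm by blast
  show "\<And>a c s. a \<in> BB \<Longrightarrow> c \<in> BB \<Longrightarrow> hh (mpscale s a) c = s * hh a c"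
    using hscale BCm by blast
  show "\<And>a b. a \<in> BB \<Longrightarrow> b \<in> BB \<Longrightarrow> hh a b = cnj (hh b a)"
    using hsym BCm by blast
  show "\<And>a. a \<in> BB \<Longrightarrow> 0 \<le> Re (hh a a)" using hpos BCm by blast
  show "\<And>l a b. TT l (a + b) = TT l a + TT l b" by (rule TT_add)
  show "\<And>l s a. TT l (mpscale s a) = mpscale s (TT l a)" by (rule TT_scale)
  show "\<And>l a. l < d \<Longrightarrow> a \<in> BB \<Longrightarrow> TT l a \<in> BB" using TT_B by blast
  show "\<And>l a b. l < d \<Longrightarrow> a \<in> BB \<Longrightarrow> b \<in> BB \<Longrightarrow> hh (TT l a) b = hh a (TT l b)" by (rule Tsa)
  show "\<And>l k a b. l < d \<Longrightarrow> k < d \<Longrightarrow> a \<in> BB \<Longrightarrow> b \<in> BB \<Longrightarrow> hh (TT l (TT k a)) b = hh (TT k (TT l a)) b"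
    by (simp add: TTT xm_comm)
qed

lemma X2: assumes eB: "\<forall>i<r. e i \<in> BB"
    and pars: "\<forall>v\<in>BB. \<forall>w\<in>BB. hh v w = (\<Sum>i<r. hh v (e i) * hh (e i) w)"
    and c: "c \<in> CC" and c': "c' \<in> CC"
  shows "hh c c' = (\<Sum>i<r. hh c (e i) * hh (e i) c')"
proof -
  obtain b where b: "b \<in> BB" "c - b \<in> KK" using decomp[OF c] by blast
  obtain b' where b': "b' \<in> BB" "c' - b' \<in> KK" using decomp[OF c'] by blast
  have eC: "i < r \<Longrightarrow> e i \<in> CC" for i using eB BCm by blast
  have "hh c c' = hh b c'" using hK_sub1[OF BCm[OF b(1)] c b(2) c'] .
  also have "\<dots> = hh b b'" using hK_sub2[OF BCm[OF b'(1)] c' b'(2) BCm[OF b(1)]] .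
  also have "\<dots> = (\<Sum>i<r. hh b (e i) * hh (e i) b')" using pars b(1) b'(1) by blast
  also have "\<dots> = (\<Sum>i<r. hh c (e i) * hh (e i) c')"
  proof (rule sum.cong)
    fix i assume "i \<in> {..<r}"
    then have i: "e i \<in> CC" using eC by simp
    show "hh b (e i) * hh (e i) b' = hh c (e i) * hh (e i) c'"
      using hK_sub1[OF BCm[OF b(1)] c b(2) i] hK_sub2[OF BCm[OF b'(1)] c' b'(2) i] by simp
  qed simp
  finally show ?thesis .
qed

lemma X3: assumes eB: "\<forall>i<r. e i \<in> BB"
    and eig: "\<forall>i<r. \<forall>l<d. \<forall>v\<in>BB. hh v (TT l (e i)) = of_real (t i l) * hh v (e i)"
    and c: "c \<in> CC" and i: "i < r" and l: "l < d"
  shows "hh c (xm l (e i)) = of_real (t i l) * hh c (e i)"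
proof -
  have ei: "e i \<in> BB" using eB i by blast
  obtain b where b: "b \<in> BB" "c - b \<in> KK" using decomp[OF c] by blast
  have "hh c (xm l (e i)) = hh c (TT l (e i))"
    using hK_sub2[OF xmB_C[OF l ei] BCm[OF TT_B[OF l]] TT_K[OF l ei] c] by simp
  also have "\<dots> = hh b (TT l (e i))" using hK_sub1[OF BCm[OF b(1)] c b(2) BCm[OF TT_B[OF l]]] .
  also have "\<dots> = of_real (t i l) * hh b (e i)" using eig i l b(1) by blast
  also have "\<dots> = of_real (t i l) * hh c (e i)" using hK_sub1[OF BCm[OF b(1)] c b(2) BCm[OF ei]] by simp
  finally show ?thesis .
qed

lemma X4: assumes eB: "\<forall>i<r. e i \<in> BB"
    and eig: "\<forall>i<r. \<forall>l<d. \<forall>v\<in>BB. hh v (TT l (e i)) = of_real (t i l) * hh v (e i)"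
    and k: "k < n" and i: "i < r"
  shows "\<forall>\<gamma>. \<gamma> \<in> multi_idx d K' \<longrightarrow> K' \<le> Suc m \<longrightarrow>
     hh (E \<gamma> 0 k) (e i) = (\<Prod>l<d. complex_of_real (t i l) ^ \<gamma> l) * hh (E (\<lambda>_. 0) 0 k) (e i)"
proof (induction K')
  case 0
  show ?case
  proof (intro allI impI)
    fix \<gamma> assume g: "\<gamma> \<in> multi_idx d 0"
    have "\<gamma> x = 0" for x
    proof (cases "x < d")
      case True
      have "\<gamma> x \<le> sum \<gamma> {..<d}" using True by (intro member_le_sum) auto
      then show ?thesis using g by (simp add: multi_idx_def)
    next
      case False then show ?thesis using g by (simp add: multi_idx_def)
    qed
    then have "\<gamma> = (\<lambda>_. 0)" by auto
    then show "hh (E \<gamma> 0 k) (e i) = (\<Prod>l<d. complex_of_real (t i l) ^ \<gamma> l) * hh (E (\<lambda>_. 0) 0 k) (e i)" by simp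
  qed
next
  case (Suc K')
  show ?case
  proof (intro allI impI)
    fix \<gamma> assume g: "\<gamma> \<in> multi_idx d (Suc K')" and K': "Suc K' \<le> Suc m"
    show "hh (E \<gamma> 0 k) (e i) = (\<Prod>l<d. complex_of_real (t i l) ^ \<gamma> l) * hh (E (\<lambda>_. 0) 0 k) (e i)"
    proof (cases "\<gamma> \<in> multi_idx d K'")
      case True then show ?thesis using Suc.IH K' by simp
    next
      case False
      then have sg: "sum \<gamma> {..<d} = Suc K'" using g by (auto simp: multi_idx_def)
      have "\<exists>l<d. 0 < \<gamma> l"
      proof (rule ccontr)
        assume "\<not> ?thesis"
        then have "sum \<gamma> {..<d} = 0" by (intro sum.neutral) auto
        then show False using sg by simp
      qed
      then obtain l where l: "l < d" "0 < \<gamma> l" by blast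
      define \<gamma>' where "\<gamma>' = \<gamma>(l := \<gamma> l - 1)"
      have gg: "\<gamma>'(l := Suc (\<gamma>' l)) = \<gamma>" using l by (auto simp: \<gamma>'_def fun_eq_iff)
      have "sum \<gamma> {..<d} = Suc (sum \<gamma>' {..<d})" using sum_upd_Suc[OF l(1), of \<gamma>'] gg by simp
      then have g': "\<gamma>' \<in> multi_idx d K'" using g sg by (auto simp: multi_idx_def \<gamma>'_def)
      have g'm: "\<gamma>' \<in> multi_idx d m" using g' K' by (auto simp: multi_idx_def)
      have n0: "0 < n" using k by simp
      have EB: "E \<gamma>' 0 k \<in> BB" by (rule E_Ak[OF g'm n0 k])
      have ei: "e i \<in> BB" using eB i by blast
      have "E \<gamma> 0 k = xm l (E \<gamma>' 0 k)" using xm_E[of l \<gamma>' 0 k] gg by simp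
      then have "hh (E \<gamma> 0 k) (e i) = hh (E \<gamma>' 0 k) (xm l (e i))" using xm_adj[OF l(1) EB ei] by simp
      also have "\<dots> = of_real (t i l) * hh (E \<gamma>' 0 k) (e i)" by (rule X3[OF eB eig BCm[OF EB] i l(1)])
      also have "\<dots> = of_real (t i l) * ((\<Prod>x<d. complex_of_real (t i x) ^ \<gamma>' x) * hh (E (\<lambda>_. 0) 0 k) (e i))"
        using Suc.IH g' K' by simp
      also have "\<dots> = (\<Prod>x<d. complex_of_real (t i x) ^ \<gamma> x) * hh (E (\<lambda>_. 0) 0 k) (e i)"
        using prod_upd[OF l(1), of "\<lambda>x. complex_of_real (t i x)" \<gamma>'] gg by simp
      finally show ?thesis .
    qed
  qed
qed

lemma main_ctx:
  "\<exists>(r::nat) (t::nat \<Rightarrow> nat \<Rightarrow> real) (u::nat \<Rightarrow> nat \<Rightarrow> complex).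
     \<forall>p\<in>AA. L p = (\<Sum>j<n. \<Sum>k<n. \<Sum>i<r. mpeval d (Suc (Suc (2*m))) p j k (t i) * u k i * cnj (u j i))"
proof -
  obtain r e t where onf: "core.ONF BB hh TT d r e t"
    and pars: "\<forall>v\<in>BB. \<forall>w\<in>BB. hh v w = (\<Sum>i<r. hh v (e i) * hh (e i) w)"
    using core.core_decomp[OF core_inst] by blast
  have eB: "\<forall>i<r. e i \<in> BB"
    and eig: "\<forall>i<r. \<forall>l<d. \<forall>v\<in>BB. hh v (TT l (e i)) = of_real (t i l) * hh v (e i)"
    using onf unfolding core.ONF_def[OF core_inst] by auto
  define u where "u k i = hh (E (\<lambda>_. 0) 0 k) (e i)" for k i
  define tp where "tp i \<alpha> = (\<Prod>l<d. complex_of_real (t i l) ^ \<alpha> l)" for i \<alpha>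
  define M where "M = multi_idx d (Suc (Suc (2*m)))"
  have LE: "L (E \<alpha> j k) = (\<Sum>i<r. tp i \<alpha> * u k i * cnj (u j i))"
    if \<alpha>: "\<alpha> \<in> M" and j: "j < n" and k: "k < n" for \<alpha> j k
  proof -
    obtain \<beta> \<gamma> where bg: "\<beta> \<in> multi_idx d (Suc m)" "\<gamma> \<in> multi_idx d (Suc m)" "\<alpha> = (\<lambda>x. \<beta> x + \<gamma> x)"
      using split_multi \<alpha> M_def by blast
    have n0: "0 < n" using j by simp
    have Eb: "E \<beta> 0 j \<in> CC" by (rule E_Ak[OF bg(1) n0 j])
    have Eg: "E \<gamma> 0 k \<in> CC" by (rule E_Ak[OF bg(2) n0 k])
    have "mpmult n (E \<beta> j 0) (E \<gamma> 0 k) = E \<alpha> j k"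
      using mult_E_E[OF bg(1) bg(2) n0 k, where i=j and k=0] bg(3) by simp
    then have "L (E \<alpha> j k) = hh (E \<gamma> 0 k) (E \<beta> 0 j)" by (simp add: hh_def mpstar_E)
    also have "\<dots> = (\<Sum>i<r. hh (E \<gamma> 0 k) (e i) * hh (e i) (E \<beta> 0 j))" by (rule X2[OF eB pars Eg Eb])
    also have "\<dots> = (\<Sum>i<r. tp i \<alpha> * u k i * cnj (u j i))"
    proof (rule sum.cong)
      fix i assume "i \<in> {..<r}"
      then have i: "i < r" by simp
      have eC: "e i \<in> CC" using eB i BCm by blast
      have 1: "hh (E \<gamma> 0 k) (e i) = tp i \<gamma> * u k i"
        using X4[OF eB eig k i, of "Suc m"] bg(2) by (simp add: tp_def u_def)
      have 2: "hh (e i) (E \<beta> 0 j) = cnj (tp i \<beta> * u j i)"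
        using X4[OF eB eig j i, of "Suc m"] bg(1) hsym[OF eC Eb] by (simp add: tp_def u_def)
      have 3: "cnj (tp i \<beta>) = tp i \<beta>" by (simp add: tp_def)
      have 4: "tp i \<gamma> * tp i \<beta> = tp i \<alpha>"
        using prod_add_pow[where f="\<lambda>l. complex_of_real (t i l)" and g=\<beta> and h=\<gamma> and d=d] bg(3) by (simp add: tp_def mult.commute)
      show "hh (E \<gamma> 0 k) (e i) * hh (e i) (E \<beta> 0 j) = tp i \<alpha> * u k i * cnj (u j i)"
        unfolding 1 2 using 3 4 by (simp add: algebra_simps)
    qed simp
    finally show ?thesis .
  qed
  have "\<forall>p\<in>AA. L p = (\<Sum>j<n. \<Sum>k<n. \<Sum>i<r. mpeval d (Suc (Suc (2*m))) p j k (t i) * u k i * cnj (u j i))"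
  proof
    fix p assume p: "p \<in> AA"
    have ep: "p = (\<Sum>(\<alpha>,i,j)\<in>Sk n d (Suc (Suc (2*m))). mpscale (p \<alpha> i j) (E \<alpha> i j))" by (rule expand[OF p])
    have "L p = L (\<Sum>(\<alpha>,i,j)\<in>Sk n d (Suc (Suc (2*m))). mpscale (p \<alpha> i j) (E \<alpha> i j))"
      by (rule arg_cong[where f = L]) (rule ep)
    also have "\<dots> = (\<Sum>s\<in>Sk n d (Suc (Suc (2*m))). L (case s of (\<alpha>,i,j) \<Rightarrow> mpscale (p \<alpha> i j) (E \<alpha> i j)))"
    proof (rule Lsum)
      fix s assume s: "s \<in> Sk n d (Suc (Suc (2*m)))"
      then obtain \<alpha> i j where sij: "s = (\<alpha>, i, j)" "\<alpha> \<in> M" "i < n" "j < n" by (auto simp: Sk_def M_def)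
      have "E \<alpha> i j \<in> AA" using E_Ak sij by (simp add: M_def)
      then show "(case s of (\<alpha>,i,j) \<Rightarrow> mpscale (p \<alpha> i j) (E \<alpha> i j)) \<in> AA"
        using sij mv.subspace_scale[OF Ak_sub] by simp
    qed
    also have "\<dots> = (\<Sum>(\<alpha>,j,k)\<in>Sk n d (Suc (Suc (2*m))). p \<alpha> j k * (\<Sum>i<r. tp i \<alpha> * u k i * cnj (u j i)))"
    proof (rule sum.cong)
      fix s assume s: "s \<in> Sk n d (Suc (Suc (2*m)))"
      then obtain \<alpha> i j where sij: "s = (\<alpha>, i, j)" "\<alpha> \<in> M" "i < n" "j < n" by (auto simp: Sk_def M_def)
      have "E \<alpha> i j \<in> AA" using E_Ak sij by (simp add: M_def)
      then show "L (case s of (\<alpha>,i,j) \<Rightarrow> mpscale (p \<alpha> i j) (E \<alpha> i j)) = (case s of (\<alpha>,j,k) \<Rightarrow> p \<alpha> j k * (\<Sum>i<r. tp i \<alpha> * u k i * cnj (u j i)))"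
        using sij LE[OF sij(2-4)] Lscale by simp
    qed simp
    also have "\<dots> = (\<Sum>\<alpha>\<in>M. \<Sum>j<n. \<Sum>k<n. p \<alpha> j k * (\<Sum>i<r. tp i \<alpha> * u k i * cnj (u j i)))"
      unfolding Sk_def M_def by (simp add: sum.cartesian_product)
    also have "\<dots> = (\<Sum>\<alpha>\<in>M. \<Sum>j<n. \<Sum>k<n. \<Sum>i<r. p \<alpha> j k * tp i \<alpha> * u k i * cnj (u j i))"
      by (simp add: sum_distrib_left mult.assoc)
    also have "\<dots> = (\<Sum>j<n. \<Sum>\<alpha>\<in>M. \<Sum>k<n. \<Sum>i<r. p \<alpha> j k * tp i \<alpha> * u k i * cnj (u j i))"
      by (rule sum.swap)
    also have "\<dots> = (\<Sum>j<n. \<Sum>k<n. \<Sum>\<alpha>\<in>M. \<Sum>i<r. p \<alpha> j k * tp i \<alpha> * u k i * cnj (u j i))"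
      by (rule sum.cong[OF refl], rule sum.swap)
    also have "\<dots> = (\<Sum>j<n. \<Sum>k<n. \<Sum>i<r. \<Sum>\<alpha>\<in>M. p \<alpha> j k * tp i \<alpha> * u k i * cnj (u j i))"
      by (rule sum.cong[OF refl], rule sum.cong[OF refl], rule sum.swap)
    also have "\<dots> = (\<Sum>j<n. \<Sum>k<n. \<Sum>i<r. mpeval d (Suc (Suc (2*m))) p j k (t i) * u k i * cnj (u j i))"
      by (simp add: mpeval_def M_def tp_def sum_distrib_right)
    finally show "L p = (\<Sum>j<n. \<Sum>k<n. \<Sum>i<r. mpeval d (Suc (Suc (2*m))) p j k (t i) * u k i * cnj (u j i))" .
  qed
  then show ?thesis by blast
qed

end

theorem proposition4p3:
  fixes n d m :: nat and L :: "mpmat \<Rightarrow> complex"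
  assumes "lin_on (Ak n d (2*m+2)) L"
    and "positive_on n (Ak n d (m+1)) L"
    and "flat_ext n (Ak n d m) (Ak n d (m+1)) L"
  shows "\<exists>(r::nat) (t::nat \<Rightarrow> nat \<Rightarrow> real) (u::nat \<Rightarrow> nat \<Rightarrow> complex).
     \<forall>p\<in>Ak n d (2*m+2).
       L p = (\<Sum>j<n. \<Sum>k<n. \<Sum>i<r. mpeval d (2*m+2) p j k (t i) * u k i * cnj (u j i))"
proof -
  have e1: "2*m+2 = Suc (Suc (2*m))" "m+1 = Suc m" by simp_all
  show ?thesis using main_ctx[OF assms[unfolded e1]] unfolding e1 .
qed


end
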